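(* Let $k\in\mathbb{N}$, $k>2$, let $\mathcal{O}$ be an oval with support function $h$, let $\mathcal{P}_k$ be its $k$th Order Preserving Set and $D_{\mathcal{O}}$ its Steiner disk. Then \[ L_{\mathcal{O}}^2-4\pi A_{\mathcal{O}}-4\pi|A_{\mathcal{P}_k}|\geqslant 6\pi\, d_2^2(\mathcal{O},\mathcal{P}_k+D_{\mathcal{O}}), \] where $L_{\mathcal{O}}$ is the length of $\mathcal{O}$ and $A_{\mathcal{O}}$ the area it bounds.
   Context: An oval is a simple, closed, regular, smooth planar curve with nowhere vanishing curvature. Write $u(s)=(\cos s,\sin s)$, $u'(s)=(-\sin s,\cos s)$. The support function of $\mathcal{O}$ is $h(s)=\sup_{x\in\mathcal{O}}\langle x,u(s)\rangle=a_0+\sum_{n\geqslant1}(a_n\cos(ns)+b_n\sin(ns))$, and $\mathcal{O}(s)=h(s)u(s)+h'(s)u'(s)$. The average width is $\overline{w}=\frac1\pi\int_0^{2\pi}h=2a_0$; the Steiner point is $(a_1,b_1)=\frac1\pi\int_0^{2\pi}h(s)u(s)\,ds$. The Steiner disk $D_{\mathcal{O}}$ is the disk centered at the Steiner point of radius $\frac12|\overline{w}|$; its support function is $a_0+a_1\cos s+b_1\sin s$. The $k$th Order Preserving Set $\mathcal{P}_k$ is the curve $\mathcal{P}_k(s)=h_k(s)u(s)+h_k'(s)u'(s)$ with support function $h_k(s)=\frac1k\sum_{j=0}^{k-1}h(s+\tfrac{2\pi j}{k})-\frac12\overline{w}$ (equivalently $\mathcal{P}_k(s)=\frac{1}{k}\sum_{j=1}^{k}\big(\cos(\tfrac{2\pi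 j}{k})\mathcal{O}(s+\tfrac{2\pi j}{k})-\sin(\tfrac{2\pi j}{k})\mathcal{O}(s+\tfrac{2\pi j}{k})^{\perp}\big)-\frac12\overline{w}u(s)$ with $(x,y)^\perp=(-y,x)$). Its oriented area is $A_{\mathcal{P}_k}=\frac12\int_0^{2\pi}(h_k^2-h_k'^2)\,ds$. The Minkowski sum $\mathcal{P}_k+D_{\mathcal{O}}$ is the convex body with support function $h_k+a_0+a_1\cos s+b_1\sin s$. For two bodies with support functions $h_1,h_2$, $d_2=\left(\int_0^{2\pi}|h_1(s)-h_2(s)|^2ds\right)^{1/2}$. *)

theory Defs
  imports "HOL-Analysis.Analysis"
begin

definition uvec :: "real \<Rightarrow> real \<times> real" where
  "uvec s = (cos s, sin s)"

definition uvec' :: "real \<Rightarrow> real \<times> real" where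
  "uvec' s = (- sin s, cos s)"

text \<open>Hypotheses on a support function \<open>h\<close> of an oval: smooth (all derivatives exist),
  \<open>2\<pi>\<close>-periodic, and radius of curvature \<open>h + h''\<close> nowhere vanishing (positive).\<close>
definition oval_support :: "(real \<Rightarrow> real) \<Rightarrow> bool" where
  "oval_support h \<longleftrightarrow>
     (\<forall>n s. ((deriv ^^ n) h) differentiable (at s)) \<and>
     (\<forall>s. h (s + 2 * pi) = h s) \<and>
     (\<forall>s. h s + deriv (deriv h) s > 0)"

definition oval_curve :: "(real \<Rightarrow> real) \<Rightarrow> real \<Rightarrow> real \<times> real" where
  "oval_curve h s = h s *\<^sub>R uvec s + deriv h s *\<^sub>R uvec' s"

definition oval_length :: "(real \<Rightarrow> real) \<Rightarrow> real" where
  "oval_length h = integral {0..2*pi} (\<lambda>s. norm (vector_derivative (oval_curve h) (at s)))"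

definition oval_area :: "(real \<Rightarrow> real) \<Rightarrow> real" where
  "oval_area h = measure lebesgue (inside (oval_curve h ` {0..2*pi}))"

definition avg_width :: "(real \<Rightarrow> real) \<Rightarrow> real" where
  "avg_width h = (1 / pi) * integral {0..2*pi} h"

definition steiner_a1 :: "(real \<Rightarrow> real) \<Rightarrow> real" where
  "steiner_a1 h = (1 / pi) * integral {0..2*pi} (\<lambda>s. h s * cos s)"

definition steiner_b1 :: "(real \<Rightarrow> real) \<Rightarrow> real" where
  "steiner_b1 h = (1 / pi) * integral {0..2*pi} (\<lambda>s. h s * sin s)"

definition steiner_disk_support :: "(real \<Rightarrow> real) \<Rightarrow> real \<Rightarrow> real" where
  "steiner_disk_support h s = avg_width h / 2 + steiner_a1 h * cos s + steiner_b1 h * sin s"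

definition ops_support :: "nat \<Rightarrow> (real \<Rightarrow> real) \<Rightarrow> real \<Rightarrow> real" where
  "ops_support k h s = (1 / real k) * (\<Sum>j<k. h (s + 2 * pi * real j / real k)) - avg_width h / 2"

definition ops_area :: "nat \<Rightarrow> (real \<Rightarrow> real) \<Rightarrow> real" where
  "ops_area k h = (1/2) * integral {0..2*pi}
      (\<lambda>s. (ops_support k h s)\<^sup>2 - (deriv (ops_support k h) s)\<^sup>2)"

definition d2 :: "(real \<Rightarrow> real) \<Rightarrow> (real \<Rightarrow> real) \<Rightarrow> real" where
  "d2 h1 h2 = sqrt (integral {0..2*pi} (\<lambda>s. \<bar>h1 s - h2 s\<bar>\<^sup>2))"

end

theory Submission
  imports Defs
begin

lemma per_nat:
  assumes "\<forall>x. f (x + 2*pi) = (f x :: 'a)"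
  shows "f (x + 2*pi*real n) = f x"
proof (induction n arbitrary: x)
  case 0 then show ?case by simp
next
  case (Suc n)
  have "f (x + 2*pi*real (Suc n)) = f ((x + 2*pi*real n) + 2*pi)" by (simp add: algebra_simps)
  also have "\<dots> = f (x + 2*pi*real n)" using assms by blast
  finally show ?case using Suc by simp
qed

lemma per_int:
  assumes "\<forall>x. f (x + 2*pi) = (f x :: 'a)"
  shows "f (x + 2*pi * of_int m) = f x"
proof (cases "m \<ge> 0")
  case True
  then obtain n where "m = int n" by (metis nonneg_int_cases)
  then show ?thesis using per_nat[OF assms] by simp
next
  case False
  then have n: "m = - int (nat (-m))" by simp
  define n where "n = nat (-m)"
  have "f x = f ((x - 2*pi*real n) + 2*pi*real n)" by simp
  also have "\<dots> = f (x - 2*pi*real n)" using per_nat[OF assms] by blast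
  finally show ?thesis using n n_def by simp
qed


lemma integrable_cont: "continuous_on UNIV f \<Longrightarrow> (f::real\<Rightarrow>real) integrable_on {a..b}"
  by (meson continuous_on_subset integrable_continuous_interval subset_UNIV)

lemma shift_integral0:
  fixes f :: "real \<Rightarrow> real"
  assumes per: "\<forall>x. f (x + 2*pi) = f x" and cont: "continuous_on UNIV f"
    and c: "0 \<le> c" "c \<le> 2*pi"
  shows "integral {0..2*pi} (\<lambda>s. f (s + c)) = integral {0..2*pi} f"
proof -
  have ci: "continuous_on A f" for A using cont continuous_on_subset by blast
  have "integral {0..2*pi} (f \<circ> (\<lambda>x. x + c)) = integral {0+c..2*pi+c} f"
    by (rule integral_shift[OF ci])
  then have "integral {0..2*pi} (\<lambda>s. f (s + c)) = integral {c..2*pi+c} f"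
    by (simp add: o_def)
  also have "\<dots> = integral {c..2*pi} f + integral {2*pi..2*pi+c} f"
    using Henstock_Kurzweil_Integration.integral_combine[of c "2*pi" "2*pi+c" f] c integrable_cont[OF cont, of c "2*pi+c"] by auto
  also have "integral {2*pi..2*pi+c} f = integral {0..c} (\<lambda>s. f (s + 2*pi))"
  proof -
    have "integral {0..c} (f \<circ> (\<lambda>x. x + 2*pi)) = integral {0+2*pi..c+2*pi} f"
      by (rule integral_shift[OF ci])
    then show ?thesis by (simp add: o_def add.commute)
  qed
  also have "\<dots> = integral {0..c} f" using per by simp
  also have "integral {c..2*pi} f + integral {0..c} f = integral {0..2*pi} f"
    using c by (subst add.commute, intro Henstock_Kurzweil_Integration.integral_combine) (auto intro: integrable_continuous_interval ci)
  finally show ?thesis .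
qed

lemma shift_integral:
  fixes f :: "real \<Rightarrow> real"
  assumes per: "\<forall>x. f (x + 2*pi) = f x" and cont: "continuous_on UNIV f"
  shows "integral {0..2*pi} (\<lambda>s. f (s + c)) = integral {0..2*pi} f"
proof -
  define m where "m = floor (c / (2*pi))"
  define c0 where "c0 = c - 2*pi * of_int m"
  have "of_int m \<le> c / (2*pi)" "c / (2*pi) < of_int m + 1" unfolding m_def by linarith+
  then have "2*pi * of_int m \<le> c" "c < 2*pi * of_int m + 2*pi"
    by (auto simp: field_simps)
  then have c0: "0 \<le> c0" "c0 \<le> 2*pi" unfolding c0_def by auto
  have "f (s + c) = f (s + c0)" for s
    using per_int[OF per, of "s + c0" m] by (simp add: c0_def)
  then have "integral {0..2*pi} (\<lambda>s. f (s + c)) = integral {0..2*pi} (\<lambda>s. f (s + c0))" by simp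
  also have "\<dots> = integral {0..2*pi} f" by (rule shift_integral0[OF per cont c0])
  finally show ?thesis .
qed

definition delta :: "int \<Rightarrow> real" where "delta k = (if k = 0 then 1 else 0)"

lemma int_cos_int: "integral {0..2*pi} (\<lambda>s. cos (of_int k * s)) = 2*pi*delta k"
proof (cases "k = 0")
  case True then show ?thesis by (simp add: delta_def)
next
  case False
  have "((\<lambda>s. cos (of_int k * s)) has_integral (sin (of_int k * (2*pi)) / of_int k - sin (of_int k * 0) / of_int k)) {0..2*pi}"
    apply (rule fundamental_theorem_of_calculus)
    using False by (auto intro!: derivative_eq_intros simp: has_real_derivative_iff_has_vector_derivative[symmetric])
  moreover have "sin (of_int k * (2*pi)) = 0" by (metis mult.commute sin_int_2pin)
  ultimately show ?thesis using False by (simp add: delta_def integral_unique)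
qed

lemma int_sin_int: "integral {0..2*pi} (\<lambda>s. sin (of_int k * s)) = 0"
proof (cases "k = 0")
  case True then show ?thesis by simp
next
  case False
  have "((\<lambda>s. sin (of_int k * s)) has_integral (- cos (of_int k * (2*pi)) / of_int k - (- cos (of_int k * 0) / of_int k))) {0..2*pi}"
    apply (rule fundamental_theorem_of_calculus)
    using False by (auto intro!: derivative_eq_intros simp: has_real_derivative_iff_has_vector_derivative[symmetric])
  moreover have "cos (of_int k * (2*pi)) = 1" by (metis mult.commute cos_int_2pin)
  ultimately show ?thesis using False by (simp add: integral_unique)
qed

lemma icos: "(\<lambda>s::real. cos (of_int k * s)) integrable_on {a..b}"
  by (intro integrable_cont continuous_intros)
lemma isin: "(\<lambda>s::real. sin (of_int k * s)) integrable_on {a..b}"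
  by (intro integrable_cont continuous_intros)

lemma int_cos_cos: "integral {0..2*pi} (\<lambda>s. cos (of_int n * s) * cos (of_int m * s)) = pi * (delta (n - m) + delta (n + m))"
proof -
  have "(\<lambda>s::real. cos (of_int n * s) * cos (of_int m * s)) = (\<lambda>s. (cos (of_int (n-m) * s) + cos (of_int (n+m) * s)) / 2)"
    by (auto simp: cos_times_cos left_diff_distrib distrib_right)
  then have "integral {0..2*pi} (\<lambda>s. cos (of_int n * s) * cos (of_int m * s)) = (integral {0..2*pi} (\<lambda>s. cos (of_int (n-m) * s)) + integral {0..2*pi} (\<lambda>s. cos (of_int (n+m) * s))) / 2"
    by (simp only: integral_divide integral_add[OF icos icos])
  also have "\<dots> = (2*pi*delta (n-m) + 2*pi*delta (n+m)) / 2" by (simp only: int_cos_int)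
  finally show ?thesis by (simp add: algebra_simps)
qed

lemma int_sin_sin: "integral {0..2*pi} (\<lambda>s. sin (of_int n * s) * sin (of_int m * s)) = pi * (delta (n - m) - delta (n + m))"
proof -
  have "(\<lambda>s::real. sin (of_int n * s) * sin (of_int m * s)) = (\<lambda>s. (cos (of_int (n-m) * s) - cos (of_int (n+m) * s)) / 2)"
    by (auto simp: sin_times_sin left_diff_distrib distrib_right)
  then have "integral {0..2*pi} (\<lambda>s. sin (of_int n * s) * sin (of_int m * s)) = (integral {0..2*pi} (\<lambda>s. cos (of_int (n-m) * s)) - integral {0..2*pi} (\<lambda>s. cos (of_int (n+m) * s))) / 2"
    by (simp only: integral_divide integral_diff[OF icos icos])
  also have "\<dots> = (2*pi*delta (n-m) - 2*pi*delta (n+m)) / 2" by (simp only: int_cos_int)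
  finally show ?thesis by (simp add: algebra_simps)
qed

lemma int_sin_cos: "integral {0..2*pi} (\<lambda>s. sin (of_int n * s) * cos (of_int m * s)) = 0"
proof -
  have "(\<lambda>s::real. sin (of_int n * s) * cos (of_int m * s)) = (\<lambda>s. (sin (of_int (n+m) * s) + sin (of_int (n-m) * s)) / 2)"
    by (auto simp: sin_times_cos left_diff_distrib distrib_right)
  then have "integral {0..2*pi} (\<lambda>s. sin (of_int n * s) * cos (of_int m * s)) = (integral {0..2*pi} (\<lambda>s. sin (of_int (n+m) * s)) + integral {0..2*pi} (\<lambda>s. sin (of_int (n-m) * s))) / 2"
    by (simp only: integral_divide integral_add[OF isin isin])
  also have "\<dots> = 0" by (simp only: int_sin_int) simp
  finally show ?thesis .
qed

definition cc :: "nat \<Rightarrow> real \<Rightarrow> real" where "cc n s = cos (real n * s)"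
definition ss :: "nat \<Rightarrow> real \<Rightarrow> real" where "ss n s = sin (real n * s)"
definition ip :: "(real \<Rightarrow> real) \<Rightarrow> (real \<Rightarrow> real) \<Rightarrow> real" where
  "ip f g = integral {0..2*pi} (\<lambda>s. f s * g s)"

lemma cont_cc[continuous_intros]: "continuous_on S (cc n)" unfolding cc_def by (intro continuous_intros)
lemma cont_ss[continuous_intros]: "continuous_on S (ss n)" unfolding ss_def by (intro continuous_intros)

lemma ip_cc_cc: "ip (cc n) (cc m) = (if n = m then (if n = 0 then 2*pi else pi) else 0)"
  using int_cos_cos[of "int n" "int m"] by (auto simp: ip_def cc_def delta_def)
lemma ip_ss_ss: "ip (ss n) (ss m) = (if n = m \<and> n \<noteq> 0 then pi else 0)"
  using int_sin_sin[of "int n" "int m"] by (auto simp: ip_def ss_def delta_def)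
lemma ip_ss_cc: "ip (ss n) (cc m) = 0"
  using int_sin_cos[of "int n" "int m"] by (auto simp: ip_def ss_def cc_def)
lemma ip_cc_ss: "ip (cc n) (ss m) = 0"
  using int_sin_cos[of "int m" "int n"] by (auto simp: ip_def ss_def cc_def mult.commute)

lemma ip_sym: "ip f g = ip g f" unfolding ip_def by (simp add: mult.commute)

lemma ip_add_left: "continuous_on UNIV f \<Longrightarrow> continuous_on UNIV g \<Longrightarrow> continuous_on UNIV h \<Longrightarrow>
   ip (\<lambda>s. f s + g s) h = ip f h + ip g h"
  unfolding ip_def distrib_right
  by (intro integral_add integrable_cont continuous_intros) (auto intro: continuous_on_subset)

lemma ip_diff_left: "continuous_on UNIV f \<Longrightarrow> continuous_on UNIV g \<Longrightarrow> continuous_on UNIV h \<Longrightarrow>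
   ip (\<lambda>s. f s - g s) h = ip f h - ip g h"
  unfolding ip_def left_diff_distrib
  by (intro integral_diff integrable_cont continuous_intros) (auto intro: continuous_on_subset)

lemma ip_scale_left: "ip (\<lambda>s. c * f s) h = c * ip f h"
  unfolding ip_def by (simp add: mult.assoc)

lemma ip_sum_left: "finite I \<Longrightarrow> (\<And>i. i \<in> I \<Longrightarrow> continuous_on UNIV (f i)) \<Longrightarrow> continuous_on UNIV h \<Longrightarrow>
   ip (\<lambda>s. \<Sum>i\<in>I. f i s) h = (\<Sum>i\<in>I. ip (f i) h)"
  unfolding ip_def sum_distrib_right
  by (intro integral_sum integrable_cont continuous_intros) auto

lemma ip_lin2:
  assumes "continuous_on UNIV f" "continuous_on UNIV g" "continuous_on UNIV h"
  shows "ip (\<lambda>s. (a * f s + b * g s) / c) h = (a * ip f h + b * ip g h) / c"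
proof -
  have e: "(\<lambda>s. (a * f s + b * g s) / c * h s) = (\<lambda>s. (a/c) * (f s * h s) + (b/c) * (g s * h s))"
    by (rule ext) (simp add: add_divide_distrib algebra_simps)
  have i1: "(\<lambda>s. (a/c) * (f s * h s)) integrable_on {0..2*pi}"
    by (intro integrable_cont continuous_intros assms)
  have i2: "(\<lambda>s. (b/c) * (g s * h s)) integrable_on {0..2*pi}"
    by (intro integrable_cont continuous_intros assms)
  show ?thesis unfolding ip_def e integral_add[OF i1 i2]
    by (simp add: add_divide_distrib)
qed

definition FA :: "(real \<Rightarrow> real) \<Rightarrow> nat \<Rightarrow> real" where "FA g n = ip g (cc n)"
definition FB :: "(real \<Rightarrow> real) \<Rightarrow> nat \<Rightarrow> real" where "FB g n = ip g (ss n)"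

definition proj :: "(real \<Rightarrow> real) \<Rightarrow> nat \<Rightarrow> real \<Rightarrow> real" where
  "proj g N s = (\<Sum>n\<in>{1..N}. FA g n * cc n s + FB g n * ss n s) / pi"

lemma cont_proj[continuous_intros]: "continuous_on S (proj g N)"
  unfolding proj_def by (intro continuous_intros) auto

lemma ip_proj_gen:
  assumes h: "continuous_on UNIV h"
  shows "ip (proj g N) h = (\<Sum>n\<in>{1..N}. FA g n * ip (cc n) h + FB g n * ip (ss n) h) / pi"
proof -
  have "ip (proj g N) h = ip (\<lambda>s. \<Sum>n\<in>{1..N}. (FA g n * cc n s + FB g n * ss n s) / pi) h"
    unfolding proj_def by (simp add: sum_divide_distrib)
  also have "\<dots> = (\<Sum>n\<in>{1..N}. ip (\<lambda>s. (FA g n * cc n s + FB g n * ss n s) / pi) h)"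
    by (rule ip_sum_left) (auto intro!: continuous_intros h)
  also have "\<dots> = (\<Sum>n\<in>{1..N}. (FA g n * ip (cc n) h + FB g n * ip (ss n) h) / pi)"
    by (intro sum.cong refl ip_lin2 continuous_intros h)
  finally show ?thesis by (simp add: sum_divide_distrib)
qed

lemma ip_proj_cc: "ip (proj g N) (cc m) = (if 1 \<le> m \<and> m \<le> N then FA g m else 0)"
proof -
  have "ip (proj g N) (cc m) = (\<Sum>n\<in>{1..N}. FA g n * (if n = m then pi else 0)) / pi"
    by (subst ip_proj_gen) (auto simp: continuous_intros ip_cc_cc ip_ss_cc intro!: sum.cong)
  also have "\<dots> = (if 1 \<le> m \<and> m \<le> N then FA g m else 0)"
    by (simp add: sum.delta' if_distrib[of "\<lambda>x. _ * x"] cong: if_cong)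
  finally show ?thesis .
qed

lemma ip_proj_ss: "ip (proj g N) (ss m) = (if 1 \<le> m \<and> m \<le> N then FB g m else 0)"
proof -
  have "ip (proj g N) (ss m) = (\<Sum>n\<in>{1..N}. FB g n * (if n = m then pi else 0)) / pi"
    by (subst ip_proj_gen) (auto simp: continuous_intros ip_ss_ss ip_cc_ss intro!: sum.cong)
  also have "\<dots> = (if 1 \<le> m \<and> m \<le> N then FB g m else 0)"
    by (simp add: sum.delta' if_distrib[of "\<lambda>x. _ * x"] cong: if_cong)
  finally show ?thesis .
qed


lemma ip_add_right: "continuous_on UNIV f \<Longrightarrow> continuous_on UNIV g \<Longrightarrow> continuous_on UNIV h \<Longrightarrow>
   ip h (\<lambda>s. f s + g s) = ip h f + ip h g"
  using ip_add_left[of f g h] ip_sym[of h f] ip_sym[of h g] ip_sym[of h "\<lambda>s. f s + g s"] by simp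

lemma ip_diff_right: "continuous_on UNIV f \<Longrightarrow> continuous_on UNIV g \<Longrightarrow> continuous_on UNIV h \<Longrightarrow>
   ip h (\<lambda>s. f s - g s) = ip h f - ip h g"
  using ip_diff_left[of f g h] ip_sym[of h f] ip_sym[of h g] ip_sym[of h "\<lambda>s. f s - g s"] by simp

lemma ip_sq_add:
  assumes "continuous_on UNIV X" "continuous_on UNIV Y"
  shows "ip (\<lambda>s. X s + Y s) (\<lambda>s. X s + Y s) = ip X X + 2 * ip X Y + ip Y Y"
proof -
  have c: "continuous_on UNIV (\<lambda>s. X s + Y s)" by (intro continuous_intros assms)
  show ?thesis
    using ip_add_left[OF assms c] ip_add_right[OF assms assms(1)] ip_add_right[OF assms assms(2)] ip_sym[of X Y]
    by simp
qed

lemma ip_nonneg: "continuous_on UNIV f \<Longrightarrow> 0 \<le> ip f f"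
  unfolding ip_def by (intro integral_nonneg integrable_cont continuous_intros) auto

lemma ip_proj_right:
  assumes f: "continuous_on UNIV f"
  shows "ip f (proj g N) = (\<Sum>n\<in>{1..N}. FA g n * FA f n + FB g n * FB f n) / pi"
  using ip_proj_gen[OF f, of g N] ip_sym[of f "proj g N"] by (simp add: FA_def FB_def ip_sym[of "cc _"] ip_sym[of "ss _"])

lemma ip_proj_proj: "ip (proj g N) (proj g N) = (\<Sum>n\<in>{1..N}. FA g n ^ 2 + FB g n ^ 2) / pi"
proof -
  have "ip (proj g N) (proj g N) = (\<Sum>n\<in>{1..N}. FA g n * FA (proj g N) n + FB g n * FB (proj g N) n) / pi"
    by (rule ip_proj_right) (intro continuous_intros)
  also have "\<dots> = (\<Sum>n\<in>{1..N}. FA g n ^ 2 + FB g n ^ 2) / pi"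
    by (intro arg_cong[where f="\<lambda>x. x / pi"] sum.cong refl)
       (simp add: FA_def FB_def ip_proj_cc ip_proj_ss power2_eq_square)
  finally show ?thesis .
qed

lemma ip_g_proj: "continuous_on UNIV g \<Longrightarrow> ip g (proj g N) = (\<Sum>n\<in>{1..N}. FA g n ^ 2 + FB g n ^ 2) / pi"
  by (simp add: ip_proj_right power2_eq_square)

lemma ip_res_proj: "continuous_on UNIV g \<Longrightarrow> ip (\<lambda>s. g s - proj g N s) (proj g N) = 0"
  by (simp add: ip_diff_left continuous_intros ip_g_proj ip_proj_proj)

lemma bessel:
  assumes g: "continuous_on UNIV g"
  shows "ip g g = ip (\<lambda>s. g s - proj g N s) (\<lambda>s. g s - proj g N s) + (\<Sum>n\<in>{1..N}. FA g n ^ 2 + FB g n ^ 2) / pi"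
proof -
  have c1: "continuous_on UNIV (\<lambda>s. g s - proj g N s)" by (intro continuous_intros g)
  have "ip g g = ip (\<lambda>s. (g s - proj g N s) + proj g N s) (\<lambda>s. (g s - proj g N s) + proj g N s)" by simp
  also have "\<dots> = ip (\<lambda>s. g s - proj g N s) (\<lambda>s. g s - proj g N s) + 2 * ip (\<lambda>s. g s - proj g N s) (proj g N) + ip (proj g N) (proj g N)"
    by (rule ip_sq_add[OF c1]) (intro continuous_intros)
  finally show ?thesis by (simp add: ip_res_proj g ip_proj_proj)
qed

lemma res_orth_cc:
  assumes g: "continuous_on UNIV g" and m: "m \<le> N" and m0: "m = 0 \<Longrightarrow> FA g 0 = 0"
  shows "ip (\<lambda>s. g s - proj g N s) (cc m) = 0"
proof (cases "m = 0")
  case True then show ?thesis using m0 by (simp add: ip_diff_left g continuous_intros ip_proj_cc FA_def)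
next
  case False then show ?thesis using m by (simp add: ip_diff_left g continuous_intros ip_proj_cc FA_def)
qed

lemma res_orth_ss:
  assumes g: "continuous_on UNIV g" and m: "m \<le> N"
  shows "ip (\<lambda>s. g s - proj g N s) (ss m) = 0"
proof (cases "m = 0")
  case True then show ?thesis by (simp add: ss_def ip_def)
next
  case False then show ?thesis using m by (simp add: ip_diff_left g continuous_intros ip_proj_ss FB_def)
qed

definition trigL :: "(int \<times> real \<times> real) list \<Rightarrow> real \<Rightarrow> real" where
  "trigL L s = sum_list (map (\<lambda>(n,a,b). a * cos (of_int n * s) + b * sin (of_int n * s)) L)"

lemma trigL_simps[simp]: "trigL [] s = 0"
  "trigL ((n,a,b) # L) s = a * cos (of_int n * s) + b * sin (of_int n * s) + trigL L s"
  by (simp_all add: trigL_def)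

lemma cont_trigL[continuous_intros]: "continuous_on S (trigL L)"
proof (induction L)
  case Nil then show ?case by (simp add: trigL_def)
next
  case (Cons x L)
  obtain n a b where x: "x = (n,a,b)" by (cases x) auto
  have e: "trigL (x # L) = (\<lambda>s. a * cos (of_int n * s) + b * sin (of_int n * s) + trigL L s)"
    using x by (auto simp: fun_eq_iff)
  show ?case unfolding e by (intro continuous_intros Cons)
qed

lemma term_eq: "a * cos (of_int n * s) + b * sin (of_int n * s) = a * cc (nat \<bar>n\<bar>) s + (if n \<ge> 0 then b else - b) * ss (nat \<bar>n\<bar>) s"
  by (cases "n \<ge> 0") (auto simp: cc_def ss_def)

lemma res_orth_trigL:
  assumes g: "continuous_on UNIV g" and g0: "FA g 0 = 0"
    and L: "\<forall>(n,a,b)\<in>set L. nat \<bar>n\<bar> \<le> N"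
  shows "ip (\<lambda>s. g s - proj g N s) (trigL L) = 0"
  using L
proof (induction L)
  case Nil then show ?case by (simp add: ip_def trigL_def)
next
  case (Cons x L)
  obtain n a b where x: "x = (n,a,b)" by (cases x) auto
  define b' where "b' = (if n \<ge> 0 then b else - b)"
  define m where "m = nat \<bar>n\<bar>"
  have e: "trigL (x # L) = (\<lambda>s. (a * cc m s + b' * ss m s) + trigL L s)"
    using x by (auto simp: fun_eq_iff term_eq b'_def m_def)
  have mN: "m \<le> N" using Cons.prems x m_def by auto
  have c1: "continuous_on UNIV (\<lambda>s. g s - proj g N s)" by (intro continuous_intros g)
  have "ip (\<lambda>s. g s - proj g N s) (trigL (x # L)) =
        ip (\<lambda>s. g s - proj g N s) (\<lambda>s. a * cc m s + b' * ss m s) + ip (\<lambda>s. g s - proj g N s) (trigL L)"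
    unfolding e by (rule ip_add_right) (intro continuous_intros g)+
  also have "ip (\<lambda>s. g s - proj g N s) (\<lambda>s. a * cc m s + b' * ss m s) =
     ip (\<lambda>s. g s - proj g N s) (\<lambda>s. a * cc m s) + ip (\<lambda>s. g s - proj g N s) (\<lambda>s. b' * ss m s)"
    by (rule ip_add_right) (intro continuous_intros g)+
  also have "ip (\<lambda>s. g s - proj g N s) (\<lambda>s. a * cc m s) = a * ip (\<lambda>s. g s - proj g N s) (cc m)"
    by (simp add: ip_sym[of "\<lambda>s. g s - proj g N s"] ip_scale_left)
  also have "ip (\<lambda>s. g s - proj g N s) (\<lambda>s. b' * ss m s) = b' * ip (\<lambda>s. g s - proj g N s) (ss m)"
    by (simp add: ip_sym[of "\<lambda>s. g s - proj g N s"] ip_scale_left)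
  finally show ?case
    using res_orth_cc[OF g mN] res_orth_ss[OF g mN] g0 Cons by auto
qed

lemma proj_best:
  assumes g: "continuous_on UNIV g" and g0: "FA g 0 = 0"
    and L: "\<forall>(n,a,b)\<in>set L. nat \<bar>n\<bar> \<le> N"
  shows "ip (\<lambda>s. g s - proj g N s) (\<lambda>s. g s - proj g N s) \<le> ip (\<lambda>s. g s - trigL L s) (\<lambda>s. g s - trigL L s)"
proof -
  define X where "X = (\<lambda>s. g s - proj g N s)"
  define Y where "Y = (\<lambda>s. proj g N s - trigL L s)"
  have cX: "continuous_on UNIV X" unfolding X_def by (intro continuous_intros g)
  have cY: "continuous_on UNIV Y" unfolding Y_def by (intro continuous_intros g)
  have "ip X Y = ip X (proj g N) - ip X (trigL L)"
    unfolding Y_def by (rule ip_diff_right) (intro continuous_intros cX)+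
  also have "\<dots> = 0" unfolding X_def using ip_res_proj[OF g] res_orth_trigL[OF g g0 L] by simp
  finally have XY: "ip X Y = 0" .
  have "(\<lambda>s. g s - trigL L s) = (\<lambda>s. X s + Y s)" by (auto simp: X_def Y_def)
  then have "ip (\<lambda>s. g s - trigL L s) (\<lambda>s. g s - trigL L s) = ip X X + 2 * ip X Y + ip Y Y"
    using ip_sq_add[OF cX cY] by simp
  then show ?thesis using XY ip_nonneg[OF cY] unfolding X_def by simp
qed

lemma ip_sq_le:
  assumes "continuous_on UNIV f" "\<And>s. \<bar>f s\<bar> \<le> e"
  shows "ip f f \<le> 2 * pi * e^2"
proof -
  have "ip f f \<le> integral {0..2*pi} (\<lambda>s. e^2)"
    unfolding ip_def
  proof (rule integral_le)
    show "(\<lambda>s. f s * f s) integrable_on {0..2*pi}" by (intro integrable_cont continuous_intros assms)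
    show "(\<lambda>s. e^2) integrable_on {0..2*pi}" by (rule integrable_const_ivl)
    fix s
    have "\<bar>f s\<bar> * \<bar>f s\<bar> \<le> e * e" using assms(2)[of s] by (intro mult_mono) auto
    then show "f s * f s \<le> e^2" by (simp add: power2_eq_square abs_mult[symmetric])
  qed
  then show ?thesis by simp
qed

lemma trigL_append: "trigL (L1 @ L2) s = trigL L1 s + trigL L2 s"
  by (simp add: trigL_def)

lemma term_mult: "(a * cos (of_int n * s) + b * sin (of_int n * s)) * (c * cos (of_int m * s) + d * sin (of_int m * s))
   = trigL [(n - m, (a*c+b*d)/2, (b*c-a*d)/2), (n + m, (a*c-b*d)/2, (a*d+b*c)/2)] s"
proof -
  have e1: "of_int (n - m) * s = of_int n * s - of_int m * s" by (simp add: algebra_simps)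
  have e2: "of_int (n + m) * s = of_int n * s + of_int m * s" by (simp add: algebra_simps)
  show ?thesis unfolding trigL_simps e1 e2 cos_diff cos_add sin_diff sin_add
    by (simp add: field_simps)
qed

lemma term_mult_trigL: "\<exists>L. \<forall>s. (a * cos (of_int n * s) + b * sin (of_int n * s)) * trigL L2 s = trigL L s"
proof (induction L2)
  case Nil then show ?case by (rule exI[of _ "[]"]) simp
next
  case (Cons x L2)
  obtain m c d where x: "x = (m,c,d)" by (cases x) auto
  from Cons obtain L where L: "\<forall>s. (a * cos (of_int n * s) + b * sin (of_int n * s)) * trigL L2 s = trigL L s" by blast
  define L0 where "L0 = [(n - m, (a*c+b*d)/2, (b*c-a*d)/2), (n + m, (a*c-b*d)/2, (a*d+b*c)/2)]"
  have "(a * cos (of_int n * s) + b * sin (of_int n * s)) * trigL (x # L2) s = trigL (L0 @ L) s" for s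
  proof -
    have "(a * cos (of_int n * s) + b * sin (of_int n * s)) * trigL (x # L2) s =
      (a * cos (of_int n * s) + b * sin (of_int n * s)) * (c * cos (of_int m * s) + d * sin (of_int m * s))
      + (a * cos (of_int n * s) + b * sin (of_int n * s)) * trigL L2 s"
      by (simp add: x distrib_left)
    also have "\<dots> = trigL L0 s + trigL L s" by (simp only: L0_def term_mult L)
    finally show ?thesis by (simp add: trigL_append)
  qed
  then show ?case by blast
qed

lemma trigL_mult: "\<exists>L. \<forall>s. trigL L1 s * trigL L2 s = trigL L s"
proof (induction L1)
  case Nil then show ?case by (rule exI[of _ "[]"]) simp
next
  case (Cons x L1)
  obtain n a b where x: "x = (n,a,b)" by (cases x) auto
  from Cons obtain L where L: "\<forall>s. trigL L1 s * trigL L2 s = trigL L s" by blast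
  obtain L' where L': "\<forall>s. (a * cos (of_int n * s) + b * sin (of_int n * s)) * trigL L2 s = trigL L' s"
    using term_mult_trigL by blast
  have "trigL (x # L1) s * trigL L2 s = trigL (L' @ L) s" for s
  proof -
    have "trigL (x # L1) s * trigL L2 s = (a * cos (of_int n * s) + b * sin (of_int n * s)) * trigL L2 s + trigL L1 s * trigL L2 s"
      by (simp add: x distrib_right)
    also have "\<dots> = trigL L' s + trigL L s" using L L' by simp
    finally show ?thesis by (simp add: trigL_append)
  qed
  then show ?case by blast
qed


lemma per_cont_Arg:
  fixes g :: "real \<Rightarrow> real"
  assumes per: "\<forall>x. g (x + 2*pi) = g x" and cont: "continuous_on UNIV g"
  shows "continuous_on (sphere 0 1) (\<lambda>z. g (Arg z))"
proof (rule continuous_at_imp_continuous_on, intro ballI)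
  fix z :: complex assume z: "z \<in> sphere 0 1"
  then have z0: "z \<noteq> 0" by auto
  have gc: "isCont g x" for x using cont by (simp add: continuous_on_eq_continuous_at)
  show "isCont (\<lambda>z. g (Arg z)) z"
  proof (cases "z \<in> \<real>\<^sub>\<le>\<^sub>0")
    case False
    then show ?thesis by (intro isCont_o2[OF continuous_at_Arg[OF False]] gc)
  next
    case True
    have nz: "- z \<notin> \<real>\<^sub>\<le>\<^sub>0" using True z0 by (auto simp: complex_nonpos_Reals_iff complex_eq_iff)
    have c1: "isCont (\<lambda>w. g (Arg (- w) + pi)) z"
    proof -
      have "isCont (\<lambda>w. - w) z" by simp
      moreover have "isCont Arg (- z)" using continuous_at_Arg[OF nz] .
      ultimately have "isCont (\<lambda>w. Arg (- w)) z" by (rule isCont_o2)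
      then have "isCont (\<lambda>w. Arg (- w) + pi) z" by simp
      then show ?thesis by (rule isCont_o2) (rule gc)
    qed
    have eq: "g (Arg w) = g (Arg (- w) + pi)" if "w \<noteq> 0" for w
    proof (cases "Arg w \<le> 0")
      case True then show ?thesis using Arg_minus[OF that] per[rule_format, of "Arg w"] by (simp add: add.commute)
    next
      case False then show ?thesis using Arg_minus[OF that] per by simp
    qed
    have "eventually (\<lambda>w. w \<in> - {0}) (nhds z)"
      by (rule eventually_nhds_in_open) (use z0 in auto)
    then have "eventually (\<lambda>w. g (Arg w) = g (Arg (- w) + pi)) (nhds z)"
      by eventually_elim (use eq in auto)
    then have "isCont (\<lambda>w. g (Arg w)) z = isCont (\<lambda>w. g (Arg (- w) + pi)) z" by (rule isCont_cong)
    then show ?thesis using c1 by simp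
  qed
qed

lemma g_Arg_cis:
  fixes g :: "real \<Rightarrow> real"
  assumes per: "\<forall>x. g (x + 2*pi) = g x"
  shows "g (Arg (cis s)) = g s"
proof -
  obtain k where k: "Im (\<i> * complex_of_real s) - of_int k * (2 * pi) = Arg (exp (\<i> * complex_of_real s))"
    using Arg_exp_diff_2pi by blast
  then have "Arg (cis s) = s + 2 * pi * of_int (- k)" by (simp add: cis_conv_exp algebra_simps)
  then show ?thesis using per_int[OF per, of s "- k"] by simp
qed

lemma trig_approx:
  fixes g :: "real \<Rightarrow> real"
  assumes per: "\<forall>x. g (x + 2*pi) = g x" and cont: "continuous_on UNIV g" and e: "0 < e"
  shows "\<exists>L. \<forall>s. \<bar>g s - trigL L s\<bar> < e"
proof -
  define P where "P = (\<lambda>f::complex \<Rightarrow> real. continuous_on (sphere 0 1) f \<and> (\<exists>L. \<forall>s. f (cis s) = trigL L s))"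
  have cis_sphere: "cis s \<in> sphere 0 1" for s by simp
  have sphere_cis: "z \<in> sphere 0 1 \<Longrightarrow> \<exists>s. z = cis s" for z
  proof -
    assume z: "z \<in> sphere 0 1"
    then have "z \<noteq> 0" by auto
    then have "cis (Arg z) = sgn z" by (rule cis_Arg)
    also have "sgn z = z" using z by (simp add: sgn_div_norm)
    finally show ?thesis by metis
  qed
  have "\<exists>f. P f \<and> (\<forall>x\<in>sphere 0 1. \<bar>g (Arg x) - f x\<bar> < e)"
  proof (rule Stone_Weierstrass_HOL[where P=P])
    show "compact (sphere (0::complex) 1)" by simp
    show "P (\<lambda>x. c)" for c
      unfolding P_def by (auto intro!: exI[of _ "[(0,c,0)]"] continuous_intros)
    show "continuous_on (sphere 0 1) f" if "P f" for f using that by (simp add: P_def)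
    show "P (\<lambda>x. f x + h x)" if "P f \<and> P h" for f h
    proof -
      from that obtain L1 L2 where "\<forall>s. f (cis s) = trigL L1 s" "\<forall>s. h (cis s) = trigL L2 s"
        "continuous_on (sphere 0 1) f" "continuous_on (sphere 0 1) h" by (auto simp: P_def)
      then show ?thesis unfolding P_def
        by (auto intro!: exI[of _ "L1 @ L2"] continuous_intros simp: trigL_append)
    qed
    show "P (\<lambda>x. f x * h x)" if "P f \<and> P h" for f h
    proof -
      from that obtain L1 L2 where L: "\<forall>s. f (cis s) = trigL L1 s" "\<forall>s. h (cis s) = trigL L2 s"
        and c: "continuous_on (sphere 0 1) f" "continuous_on (sphere 0 1) h" by (auto simp: P_def)
      obtain L where "\<forall>s. trigL L1 s * trigL L2 s = trigL L s" using trigL_mult by blast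
      then show ?thesis unfolding P_def using L c
        by (auto intro!: exI[of _ L] continuous_intros)
    qed
    show "\<exists>f. P f \<and> f x \<noteq> f y" if "x \<in> sphere 0 1 \<and> y \<in> sphere 0 1 \<and> x \<noteq> y" for x y
    proof (cases "Re x = Re y")
      case True
      then have "Im x \<noteq> Im y" using that complex_eq_iff by blast
      moreover have "P Im" unfolding P_def
        by (auto intro!: exI[of _ "[(1,0,1)]"] continuous_intros)
      ultimately show ?thesis by blast
    next
      case False
      moreover have "P Re" unfolding P_def
        by (auto intro!: exI[of _ "[(1,1,0)]"] continuous_intros)
      ultimately show ?thesis by blast
    qed
    show "continuous_on (sphere 0 1) (\<lambda>z. g (Arg z))" by (rule per_cont_Arg[OF per cont])
    show "0 < e" by (rule e)
  qed
  then obtain f L where L: "\<forall>s. f (cis s) = trigL L s" and fe: "\<forall>x\<in>sphere 0 1. \<bar>g (Arg x) - f x\<bar> < e"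
    by (auto simp: P_def)
  have "\<bar>g s - trigL L s\<bar> < e" for s
    using fe[rule_format, OF cis_sphere[of s]] L g_Arg_cis[OF per] by simp
  then show ?thesis by blast
qed

lemma ftc_zero:
  fixes F F' :: "real \<Rightarrow> real"
  assumes "\<And>s. (F has_real_derivative F' s) (at s)" "F (2*pi) = F 0"
  shows "integral {0..2*pi} F' = 0"
proof -
  have "(F' has_integral (F (2*pi) - F 0)) {0..2*pi}"
    by (rule fundamental_theorem_of_calculus)
       (auto simp: has_real_derivative_iff_has_vector_derivative[symmetric] intro: has_field_derivative_at_within assms)
  then show ?thesis using assms(2) by (simp add: integral_unique)
qed

lemma deriv_cont:
  assumes "\<And>s. (g has_real_derivative g' s) (at s)"
  shows "continuous_on UNIV g"
  using assms DERIV_isCont continuous_at_imp_continuous_on by blast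

lemma by_parts_cc:
  fixes g g' :: "real \<Rightarrow> real"
  assumes per: "\<forall>x. g (x + 2*pi) = g x"
    and der: "\<And>s. (g has_real_derivative g' s) (at s)" and cg': "continuous_on UNIV g'"
  shows "FA g' n = real n * FB g n" "FB g' n = - real n * FA g n"
proof -
  have cg: "continuous_on UNIV g" by (rule deriv_cont[OF der])
  have c2pi: "cos (real n * (2*pi)) = 1" "sin (real n * (2*pi)) = 0"
    using cos_int_2pin[of "int n"] sin_int_2pin[of "int n"] by (simp_all add: mult.commute)
  have g2: "g (2*pi) = g 0" using per[rule_format, of 0] by simp
  have "integral {0..2*pi} (\<lambda>s. g' s * cos (real n * s) - real n * (g s * sin (real n * s))) = 0"
    by (rule ftc_zero[where F="\<lambda>s. g s * cos (real n * s)"])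
       (auto intro!: derivative_eq_intros der simp: c2pi g2)
  moreover have "integral {0..2*pi} (\<lambda>s. g' s * cos (real n * s) - real n * (g s * sin (real n * s)))
     = integral {0..2*pi} (\<lambda>s. g' s * cos (real n * s)) - real n * integral {0..2*pi} (\<lambda>s. g s * sin (real n * s))"
    by (subst integral_diff) (auto intro!: integrable_cont continuous_intros cg cg')
  ultimately show "FA g' n = real n * FB g n" by (simp add: FA_def FB_def ip_def cc_def ss_def)
  have "integral {0..2*pi} (\<lambda>s. g' s * sin (real n * s) + real n * (g s * cos (real n * s))) = 0"
    by (rule ftc_zero[where F="\<lambda>s. g s * sin (real n * s)"])
       (auto intro!: derivative_eq_intros der simp: c2pi g2)
  moreover have "integral {0..2*pi} (\<lambda>s. g' s * sin (real n * s) + real n * (g s * cos (real n * s)))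
     = integral {0..2*pi} (\<lambda>s. g' s * sin (real n * s)) + real n * integral {0..2*pi} (\<lambda>s. g s * cos (real n * s))"
    by (subst integral_add) (auto intro!: integrable_cont continuous_intros cg cg')
  ultimately show "FB g' n = - real n * FA g n" by (simp add: FA_def FB_def ip_def cc_def ss_def)
qed

lemma wirtinger2:
  fixes g g' :: "real \<Rightarrow> real"
  assumes per: "\<forall>x. g (x + 2*pi) = g x"
    and der: "\<And>s. (g has_real_derivative g' s) (at s)" and cg': "continuous_on UNIV g'"
    and o0: "FA g 0 = 0" and o1: "FA g 1 = 0" and o2: "FB g 1 = 0"
  shows "4 * ip g g \<le> ip g' g'"
proof -
  have cg: "continuous_on UNIV g" by (rule deriv_cont[OF der])
  have key: "4 * ip g g \<le> ip g' g' + 8 * pi * e^2" if e: "0 < e" for e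
  proof -
    obtain L where L: "\<forall>s. \<bar>g s - trigL L s\<bar> < e" using trig_approx[OF per cg e] by blast
    define N where "N = Max (insert 0 ((\<lambda>x. nat \<bar>fst x\<bar>) ` set L))"
    have LN0: "nat \<bar>fst x\<bar> \<le> N" if "x \<in> set L" for x
      unfolding N_def by (rule Max_ge) (use that in auto)
    have LN: "\<forall>(n,a,b)\<in>set L. nat \<bar>n\<bar> \<le> N"
      using LN0 by fastforce
    define S where "S = (\<Sum>n\<in>{1..N}. FA g n ^ 2 + FB g n ^ 2)"
    define R where "R = ip (\<lambda>s. g s - proj g N s) (\<lambda>s. g s - proj g N s)"
    have R: "R \<le> 2 * pi * e^2"
    proof -
      have "R \<le> ip (\<lambda>s. g s - trigL L s) (\<lambda>s. g s - trigL L s)"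
        unfolding R_def by (rule proj_best[OF cg o0 LN])
      also have "\<dots> \<le> 2 * pi * e^2"
        by (rule ip_sq_le) (use L in \<open>auto intro!: continuous_intros cg less_imp_le\<close>)
      finally show ?thesis .
    qed
    have gg: "ip g g = R + S / pi" unfolding R_def S_def by (rule bessel[OF cg])
    have "ip g' g' \<ge> (\<Sum>n\<in>{1..N}. FA g' n ^ 2 + FB g' n ^ 2) / pi"
      using bessel[OF cg', of N] ip_nonneg[of "\<lambda>s. g' s - proj g' N s"] cg' by (auto intro!: continuous_intros)
    moreover have "(\<Sum>n\<in>{1..N}. FA g' n ^ 2 + FB g' n ^ 2) = (\<Sum>n\<in>{1..N}. (real n)^2 * (FA g n ^ 2 + FB g n ^ 2))"
      by (intro sum.cong refl) (simp add: by_parts_cc[OF per der cg'] power_mult_distrib algebra_simps)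
    moreover have "(\<Sum>n\<in>{1..N}. (real n)^2 * (FA g n ^ 2 + FB g n ^ 2)) \<ge> 4 * S"
      unfolding S_def sum_distrib_left
    proof (rule sum_mono)
      fix n assume n: "n \<in> {1..N}"
      show "4 * (FA g n ^ 2 + FB g n ^ 2) \<le> (real n)^2 * (FA g n ^ 2 + FB g n ^ 2)"
      proof (cases "n = 1")
        case True then show ?thesis using o1 o2 by simp
      next
        case False
        then have "n \<ge> 2" using n by auto
        then have "(2::real) \<le> real n" by simp
        then have "(2::real)^2 \<le> (real n)^2" by (rule power_mono) auto
        then have "(4::real) \<le> (real n)^2" by simp
        then show ?thesis by (intro mult_right_mono) auto
      qed
    qed
    ultimately have "ip g' g' \<ge> 4 * S / pi"
      by (metis (no_types, lifting) divide_right_mono order_trans pi_ge_zero)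
    moreover have "4 * S / pi = 4 * (S / pi)" by simp
    ultimately show ?thesis using gg R by linarith
  qed
  show ?thesis
  proof (rule field_le_epsilon)
    fix d :: real assume d: "0 < d"
    define e where "e = sqrt (d / (8 * pi))"
    have "e > 0" unfolding e_def using d by simp
    moreover have "8 * pi * e^2 = d" unfolding e_def using d by simp
    ultimately show "4 * ip g g \<le> ip g' g' + d" using key by metis
  qed
qed

lemma per_deriv:
  fixes f :: "real \<Rightarrow> real"
  assumes per: "\<forall>x. f (x + 2*pi) = f x" and d: "\<And>x. f differentiable at x"
  shows "\<forall>x. deriv f (x + 2*pi) = deriv f x"
proof
  fix x
  have "(f has_real_derivative deriv f (x + 2*pi)) (at (x + 2*pi))"
    using d DERIV_deriv_iff_real_differentiable by blast
  then have "((\<lambda>x. f (x + 2*pi)) has_real_derivative deriv f (x + 2*pi)) (at x)"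
    by (simp add: DERIV_shift)
  moreover have "(\<lambda>x. f (x + 2*pi)) = f" using per by auto
  ultimately have "(f has_real_derivative deriv f (x + 2*pi)) (at x)" by simp
  moreover have "(f has_real_derivative deriv f x) (at x)"
    using d DERIV_deriv_iff_real_differentiable by blast
  ultimately show "deriv f (x + 2*pi) = deriv f x" by (rule DERIV_unique)
qed

lemma oval_facts:
  assumes "oval_support h"
  shows "\<forall>x. h (x + 2*pi) = h x"
    and "\<forall>x. deriv h (x + 2*pi) = deriv h x"
    and "\<forall>x. deriv (deriv h) (x + 2*pi) = deriv (deriv h) x"
    and "\<And>s. (h has_real_derivative deriv h s) (at s)"
    and "\<And>s. (deriv h has_real_derivative deriv (deriv h) s) (at s)"
    and "continuous_on UNIV (deriv (deriv h))"
    and "\<And>s. h s + deriv (deriv h) s > 0"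
proof -
  have d: "\<And>n s. ((deriv ^^ n) h) differentiable (at s)" and p: "\<forall>x. h (x + 2*pi) = h x"
    and pos: "\<And>s. h s + deriv (deriv h) s > 0"
    using assms unfolding oval_support_def by auto
  have d0: "h differentiable at s" for s using d[of 0 s] by simp
  have d1: "deriv h differentiable at s" for s using d[of 1 s] by simp
  have d2: "deriv (deriv h) differentiable at s" for s using d[of 2 s] by (simp add: numeral_2_eq_2)
  show "\<forall>x. h (x + 2*pi) = h x" by (rule p)
  show p1: "\<forall>x. deriv h (x + 2*pi) = deriv h x" by (rule per_deriv[OF p d0])
  show "\<forall>x. deriv (deriv h) (x + 2*pi) = deriv (deriv h) x" by (rule per_deriv[OF p1 d1])
  show "(h has_real_derivative deriv h s) (at s)" for s using d0 DERIV_deriv_iff_real_differentiable by blast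
  show "(deriv h has_real_derivative deriv (deriv h) s) (at s)" for s using d1 DERIV_deriv_iff_real_differentiable by blast
  show "continuous_on UNIV (deriv (deriv h))"
    using d2 differentiable_imp_continuous_within continuous_at_imp_continuous_on by blast
  show "h s + deriv (deriv h) s > 0" for s by (rule pos)
qed

lemma root_sum_cos:
  assumes k: "k \<ge> 2"
  shows "(\<Sum>j<k. cos (x - 2*pi*real j / real k)) = 0"
proof -
  define A where "A = pi / real k"
  have kp: "real k > 0" using k by simp
  have "0 < A" "A < pi" unfolding A_def using k by (auto simp: field_simps)
  then have sA: "sin A > 0" by (rule sin_gt_zero)
  define a where "a j = sin (x + A - 2*pi*real j / real k)" for j :: nat
  have "2 * sin A * cos (x - 2*pi*real j / real k) = a j - a (Suc j)" for j
  proof -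
    have "2 * sin A * cos (x - 2*pi*real j / real k) = sin ((x - 2*pi*real j / real k) + A) - sin ((x - 2*pi*real j / real k) - A)"
      by (simp add: sin_add sin_diff)
    moreover have "(x - 2*pi*real j / real k) - A = x + A - 2*pi*real (Suc j) / real k"
      unfolding A_def using kp by (simp add: field_simps)
    ultimately show ?thesis unfolding a_def by (simp add: algebra_simps)
  qed
  then have "2 * sin A * (\<Sum>j<k. cos (x - 2*pi*real j / real k)) = (\<Sum>j<k. a j - a (Suc j))"
    by (simp add: sum_distrib_left)
  also have "\<dots> = a 0 - a k" by (rule sum_lessThan_telescope')
  also have "a k = a 0" unfolding a_def using kp
    by (simp add: sin_diff)
  finally show ?thesis using sA by simp
qed

lemma root_sum_sin:
  assumes k: "k \<ge> 2"
  shows "(\<Sum>j<k. sin (x - 2*pi*real j / real k)) = 0"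
proof -
  define A where "A = pi / real k"
  have kp: "real k > 0" using k by simp
  have "0 < A" "A < pi" unfolding A_def using k by (auto simp: field_simps)
  then have sA: "sin A > 0" by (rule sin_gt_zero)
  define a where "a j = cos (x + A - 2*pi*real j / real k)" for j :: nat
  have "2 * sin A * sin (x - 2*pi*real j / real k) = a (Suc j) - a j" for j
  proof -
    have "2 * sin A * sin (x - 2*pi*real j / real k) = cos ((x - 2*pi*real j / real k) - A) - cos ((x - 2*pi*real j / real k) + A)"
      by (simp add: cos_add cos_diff)
    moreover have "(x - 2*pi*real j / real k) - A = x + A - 2*pi*real (Suc j) / real k"
      unfolding A_def using kp by (simp add: field_simps)
    ultimately show ?thesis unfolding a_def by (simp add: algebra_simps)
  qed
  then have "2 * sin A * (\<Sum>j<k. sin (x - 2*pi*real j / real k)) = (\<Sum>j<k. a (Suc j) - a j)"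
    by (simp add: sum_distrib_left)
  also have "\<dots> = a k - a 0" by (rule sum_lessThan_telescope)
  also have "a k = a 0" unfolding a_def using kp
    by (simp add: cos_diff)
  finally show ?thesis using sA by simp
qed


definition Pk :: "nat \<Rightarrow> (real \<Rightarrow> real) \<Rightarrow> real \<Rightarrow> real" where
  "Pk k f s = (1 / real k) * (\<Sum>j<k. f (s + 2 * pi * real j / real k))"

lemma cont_shift: "continuous_on UNIV (f::real\<Rightarrow>real) \<Longrightarrow> continuous_on UNIV (\<lambda>s. f (s + c))"
  by (rule continuous_on_compose2[of UNIV f]) (auto intro!: continuous_on_add continuous_on_id continuous_on_const)

lemma cont_shift': "continuous_on UNIV (f::real\<Rightarrow>real) \<Longrightarrow> continuous_on UNIV (\<lambda>s. f (s - c))"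
  by (rule continuous_on_compose2[of UNIV f]) (auto intro!: continuous_on_diff continuous_on_id continuous_on_const)

lemma cont_Pk[continuous_intros]: "continuous_on UNIV f \<Longrightarrow> continuous_on UNIV (Pk k f)"
  unfolding Pk_def
  by (intro continuous_on_mult continuous_on_const continuous_on_sum cont_shift)

lemma per_Pk: "\<forall>x. f (x + 2*pi) = f x \<Longrightarrow> \<forall>x. Pk k f (x + 2*pi) = Pk k f x"
proof
  fix x assume per: "\<forall>x. f (x + 2*pi) = f x"
  have "f (x + 2*pi + y) = f (x + y)" for y using per[rule_format, of "x+y"] by (simp add: add_ac)
  then show "Pk k f (x + 2*pi) = Pk k f x" unfolding Pk_def by simp
qed

lemma Pk_shift1:
  assumes k: "k \<ge> 1" and per: "\<forall>x. f (x + 2*pi) = f x"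
  shows "Pk k f (s + 2*pi / real k) = Pk k f s"
proof -
  have kp: "real k > 0" using k by simp
  define G where "G j = f (s + 2 * pi * real j / real k)" for j :: nat
  have e: "f (s + 2*pi / real k + 2 * pi * real j / real k) = G (Suc j)" for j
    unfolding G_def using kp by (simp add: field_simps)
  have Gk: "G k = G 0" unfolding G_def using kp per by simp
  have "(\<Sum>j<k. G (Suc j)) = (\<Sum>j<k. G j)"
    using sum.lessThan_Suc_shift[of G k] sum.lessThan_Suc[of G k] Gk by simp
  then show ?thesis unfolding Pk_def e by (simp add: G_def)
qed

lemma Pk_shiftj:
  assumes k: "k \<ge> 1" and per: "\<forall>x. f (x + 2*pi) = f x"
  shows "Pk k f (s + 2 * pi * real j / real k) = Pk k f s"
proof (induction j)
  case 0 then show ?case by simp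
next
  case (Suc j)
  have "s + 2 * pi * real (Suc j) / real k = (s + 2 * pi * real j / real k) + 2*pi / real k"
    by (simp add: add_divide_distrib distrib_left)
  then show ?case using Pk_shift1[OF k per, of "s + 2 * pi * real j / real k"] Suc by (simp only:)
qed

lemma integral_Pk_gen:
  assumes per: "\<forall>x. F (x + 2*pi) = F x" and cF: "continuous_on UNIV F"
    and e: "\<And>j s. j < k \<Longrightarrow> G j s = F (s + 2 * pi * real j / real k)"
    and k: "k \<ge> 1"
  shows "integral {0..2*pi} (\<lambda>s. (1 / real k) * (\<Sum>j<k. G j s)) = integral {0..2*pi} F"
proof -
  have cG: "continuous_on UNIV (\<lambda>s. F (s + 2 * pi * real j / real k))" for j
    by (rule cont_shift[OF cF])
  have "integral {0..2*pi} (\<lambda>s. (1 / real k) * (\<Sum>j<k. G j s)) = (1 / real k) * integral {0..2*pi} (\<lambda>s. \<Sum>j<k. F (s + 2 * pi * real j / real k))"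
    using e by simp
  also have "integral {0..2*pi} (\<lambda>s. \<Sum>j<k. F (s + 2 * pi * real j / real k)) = (\<Sum>j<k. integral {0..2*pi} (\<lambda>s. F (s + 2 * pi * real j / real k)))"
    by (rule integral_sum) (auto intro: integrable_cont cG)
  also have "\<dots> = (\<Sum>j<k. integral {0..2*pi} F)"
    by (intro sum.cong refl shift_integral per cF)
  finally show ?thesis using k by simp
qed

lemma int_Pk:
  assumes per: "\<forall>x. f (x + 2*pi) = f x" and cf: "continuous_on UNIV f" and k: "k \<ge> 1"
  shows "integral {0..2*pi} (Pk k f) = integral {0..2*pi} f"
  unfolding Pk_def by (rule integral_Pk_gen[OF per cf _ k]) simp

lemma ip_Pk_Pk:
  assumes per: "\<forall>x. f (x + 2*pi) = f x" and cf: "continuous_on UNIV f" and k: "k \<ge> 1"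
  shows "ip (Pk k f) (Pk k f) = ip f (Pk k f)"
proof -
  have pe: "Pk k f s * X = (1 / real k) * (\<Sum>j<k. f (s + 2 * pi * real j / real k) * X)" for s X
    by (simp add: Pk_def sum_distrib_right)
  have "ip (Pk k f) (Pk k f) = integral {0..2*pi} (\<lambda>s. (1 / real k) * (\<Sum>j<k. f (s + 2 * pi * real j / real k) * Pk k f s))"
    unfolding ip_def pe by simp
  also have "\<dots> = integral {0..2*pi} (\<lambda>s. f s * Pk k f s)"
  proof (rule integral_Pk_gen)
    show "\<forall>x. f (x + 2*pi) * Pk k f (x + 2*pi) = f x * Pk k f x" using per per_Pk[OF per] by simp
    show "continuous_on UNIV (\<lambda>s. f s * Pk k f s)" by (intro continuous_intros cf)
    show "f (s + 2 * pi * real j / real k) * Pk k f s = f (s + 2 * pi * real j / real k) * Pk k f (s + 2 * pi * real j / real k)" for j s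
      using Pk_shiftj[OF k per] by simp
  qed (rule k)
  finally show ?thesis unfolding ip_def .
qed

lemma ip_Pk_trig:
  assumes per: "\<forall>x. f (x + 2*pi) = f x" and cf: "continuous_on UNIV f" and k: "k \<ge> 2"
  shows "ip (Pk k f) (cc 1) = 0" "ip (Pk k f) (ss 1) = 0"
proof -
  have k1: "k \<ge> 1" using k by simp
  have kp: "real k > 0" using k by simp
  have cg: "continuous_on UNIV (\<lambda>s. F (s + 2 * pi * real j / real k))" if "continuous_on UNIV (F::real\<Rightarrow>real)" for F j
    by (rule cont_shift[OF that])
  {
    fix T :: "real \<Rightarrow> real"
    assume perT: "\<forall>x. T (x + 2*pi) = T x" and cT: "continuous_on UNIV T"
      and rs: "\<And>x. (\<Sum>j<k. T (x - 2*pi*real j / real k)) = 0"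
    have "ip (Pk k f) T = (1 / real k) * integral {0..2*pi} (\<lambda>s. \<Sum>j<k. f (s + 2 * pi * real j / real k) * T s)"
      unfolding ip_def Pk_def by (simp add: sum_distrib_right mult.assoc)
    also have "integral {0..2*pi} (\<lambda>s. \<Sum>j<k. f (s + 2 * pi * real j / real k) * T s)
        = (\<Sum>j<k. integral {0..2*pi} (\<lambda>s. f (s + 2 * pi * real j / real k) * T s))"
      by (rule integral_sum) (auto intro!: integrable_cont continuous_intros cg cf cT)
    also have "\<dots> = (\<Sum>j<k. integral {0..2*pi} (\<lambda>t. f t * T (t - 2 * pi * real j / real k)))"
    proof (intro sum.cong refl)
      fix j
      have "integral {0..2*pi} (\<lambda>s. (\<lambda>t. f t * T (t - 2 * pi * real j / real k)) (s + 2 * pi * real j / real k))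
          = integral {0..2*pi} (\<lambda>t. f t * T (t - 2 * pi * real j / real k))"
      proof (rule shift_integral)
        show "\<forall>x. f (x + 2 * pi) * T (x + 2 * pi - 2 * pi * real j / real k) = f x * T (x - 2 * pi * real j / real k)"
          using per perT[rule_format, of "x - 2 * pi * real j / real k" for x] by (simp add: algebra_simps)
        have "continuous_on UNIV (\<lambda>t. T (t - 2 * pi * real j / real k))"
          by (rule cont_shift'[OF cT])
        then show "continuous_on UNIV (\<lambda>t. f t * T (t - 2 * pi * real j / real k))"
          by (intro continuous_intros cf)
      qed
      then show "integral {0..2*pi} (\<lambda>s. f (s + 2 * pi * real j / real k) * T s) = integral {0..2*pi} (\<lambda>t. f t * T (t - 2 * pi * real j / real k))"
        by simp
    qed
    also have "\<dots> = integral {0..2*pi} (\<lambda>t. \<Sum>j<k. f t * T (t - 2 * pi * real j / real k))"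
      using cont_shift'[OF cT, of "2 * pi * real j / real k" for j]
      by (intro integral_sum[symmetric]) (auto intro!: integrable_cont continuous_intros cf)
    also have "\<dots> = 0" by (simp add: sum_distrib_left[symmetric] rs)
    finally have "ip (Pk k f) T = 0" by simp
  } note gen = this
  show "ip (Pk k f) (cc 1) = 0"
    by (rule gen) (auto simp: cc_def root_sum_cos[OF k] intro: continuous_intros)
  show "ip (Pk k f) (ss 1) = 0"
    by (rule gen) (auto simp: ss_def root_sum_sin[OF k] intro: continuous_intros)
qed

lemma deriv_Pk:
  assumes "\<And>s. (f has_real_derivative f' s) (at s)"
  shows "((Pk k f) has_real_derivative Pk k f' s) (at s)"
proof -
  have "((\<lambda>s. f (s + 2 * pi * real j / real k)) has_real_derivative f' (s + 2 * pi * real j / real k)) (at s)" for j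
    using assms[of "s + 2 * pi * real j / real k"] by (simp add: DERIV_shift)
  then have "((\<lambda>s. \<Sum>j<k. f (s + 2 * pi * real j / real k)) has_real_derivative (\<Sum>j<k. f' (s + 2 * pi * real j / real k))) (at s)"
    by (intro DERIV_sum) auto
  then show ?thesis unfolding Pk_def by (rule DERIV_cmult)
qed

definition iota :: "real^2 \<Rightarrow> real \<times> real" where "iota v = (v$1, v$2)"
definition kappa :: "real \<times> real \<Rightarrow> real^2" where "kappa p = (\<chi> i. if i = 1 then fst p else snd p)"

lemma kappa_nth[simp]: "kappa p $ 1 = fst p" "kappa p $ 2 = snd p"
  by (simp_all add: kappa_def)

lemma kappa_iota[simp]: "kappa (iota v) = v"
  by (simp add: vec_eq_iff forall_2 iota_def)

lemma iota_kappa[simp]: "iota (kappa p) = p"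
  by (simp add: iota_def)

lemma linear_iota: "linear iota"
  by (rule linearI) (simp_all add: iota_def)

lemma linear_kappa: "linear kappa"
  by (rule linearI) (simp_all add: vec_eq_iff forall_2)

lemma bl_iota: "bounded_linear iota" using linear_iota linear_conv_bounded_linear by blast
lemma bl_kappa: "bounded_linear kappa" using linear_kappa linear_conv_bounded_linear by blast

lemma iota_image_cbox: "iota ` cbox u v = cbox (iota u) (iota v)"
proof -
  have "x \<in> iota ` cbox u v \<longleftrightarrow> kappa x \<in> cbox u v" for x
    by (metis image_iff iota_kappa kappa_iota)
  then show ?thesis
    by (auto simp: mem_box_cart forall_2 iota_def cbox_Pair_iff[symmetric] simp del: cbox_Pair_iff)
qed


lemma kappa_image_cbox: "kappa ` cbox u v = cbox (kappa u) (kappa v)"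
proof -
  have "x \<in> kappa ` cbox u v \<longleftrightarrow> iota x \<in> cbox u v" for x
    by (metis image_iff iota_kappa kappa_iota)
  moreover have "iota x \<in> cbox u v \<longleftrightarrow> x \<in> cbox (kappa u) (kappa v)" for x
  proof -
    obtain a b where u: "u = (a,b)" by (cases u)
    obtain c d where v: "v = (c,d)" by (cases v)
    show ?thesis by (auto simp: u v mem_box_cart forall_2 iota_def)
  qed
  ultimately show ?thesis by auto
qed

lemma prod_2': "prod f (UNIV::2 set) = f 1 * f 2"
  unfolding UNIV_2 by simp

lemma content_iota: "Henstock_Kurzweil_Integration.content (cbox (iota u) (iota v)) = Henstock_Kurzweil_Integration.content (cbox u v)"
proof -
  have e1: "cbox (iota u) (iota v) = cbox (u$1, u$2) (v$1, v$2)" by (simp only: iota_def)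
  have e2: "Henstock_Kurzweil_Integration.content (cbox (u$1, u$2) (v$1, v$2)) = Henstock_Kurzweil_Integration.content (cbox (u$1) (v$1)) * Henstock_Kurzweil_Integration.content (cbox (u$2) (v$2))"
    by (rule content_Pair)
  show ?thesis
  proof (cases "cbox u v = {}")
    case True
    then obtain i where i: "v$i < u$i" using interval_eq_empty_cart(2) by blast
    then have "v$1 < u$1 \<or> v$2 < u$2" using exhaust_2[of i] by auto
    then have "Henstock_Kurzweil_Integration.content (cbox (u$1) (v$1)) * Henstock_Kurzweil_Integration.content (cbox (u$2) (v$2)) = 0"
      by (elim disjE) (simp_all add: cbox_interval)
    moreover have "Henstock_Kurzweil_Integration.content (cbox u v) = 0" using True by (simp only: content_empty)
    ultimately show ?thesis using e1 e2 by (simp only:)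
  next
    case False
    then have le: "u$1 \<le> v$1" "u$2 \<le> v$2" using interval_eq_empty_cart(2) not_less by blast+
    have "Henstock_Kurzweil_Integration.content (cbox u v) = (v$1 - u$1) * (v$2 - u$2)"
      using content_cbox_cart[OF False] by (simp only: prod_2')
    moreover have "Henstock_Kurzweil_Integration.content (cbox (u$1) (v$1)) = v$1 - u$1"
      using le(1) by (simp only: cbox_interval content_real_if if_True)
    moreover have "Henstock_Kurzweil_Integration.content (cbox (u$2) (v$2)) = v$2 - u$2"
      using le(2) by (simp only: cbox_interval content_real_if if_True)
    ultimately show ?thesis using e1 e2 by (simp only:)
  qed
qed

lemma transfer_has_integral:
  fixes J :: "real \<times> real \<Rightarrow> real"
  assumes "(J has_integral I) (cbox a b)"
  shows "((\<lambda>x. J (iota x)) has_integral I) (cbox (kappa a) (kappa b))"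
proof -
  have "((\<lambda>x. J (iota x)) has_integral (1 / 1) *\<^sub>R I) (kappa ` cbox a b)"
  proof (rule has_integral_twiddle[where g=iota and h=kappa and r=1])
    show "continuous (at x) iota" for x using linear_iota linear_continuous_at bl_iota by blast
    show "\<exists>w z. iota ` cbox u v = cbox w z" for u v using iota_image_cbox by blast
    show "\<exists>w z. kappa ` cbox u v = cbox w z" for u v using kappa_image_cbox by blast
    show "Henstock_Kurzweil_Integration.content (iota ` cbox u v) = 1 * Henstock_Kurzweil_Integration.content (cbox u v)" for u v
      by (simp add: iota_image_cbox content_iota)
  qed (use assms in auto)
  then show ?thesis by (simp add: kappa_image_cbox)
qed

lemma mem_kappa_image: "x \<in> kappa ` A \<longleftrightarrow> iota x \<in> A"
  by (metis image_iff iota_kappa kappa_iota)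

lemma transfer_measure:
  fixes A :: "(real \<times> real) set"
  assumes A: "A \<in> lmeasurable" and Ab: "A \<subseteq> cbox a b"
  shows "kappa ` A \<in> lmeasurable" "measure lebesgue (kappa ` A) = measure lebesgue A"
proof -
  have "(indicat_real A has_integral measure lebesgue A) UNIV"
    using lmeasurable_iff_indicator_has_integral[of A "measure lebesgue A"] A by simp
  moreover have "(\<lambda>x. if x \<in> cbox a b then indicat_real A x else 0) = indicat_real A"
    using Ab by (auto simp: fun_eq_iff indicator_def)
  ultimately have "(indicat_real A has_integral measure lebesgue A) (cbox a b)"
    using has_integral_restrict_UNIV[of "cbox a b" "indicat_real A"] by simp
  then have "((\<lambda>x. indicat_real A (iota x)) has_integral measure lebesgue A) (cbox (kappa a) (kappa b))"
    by (rule transfer_has_integral)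
  moreover have "(\<lambda>x. indicat_real A (iota x)) = indicat_real (kappa ` A)"
    unfolding indicator_def mem_kappa_image by (rule refl)
  ultimately have "(indicat_real (kappa ` A) has_integral measure lebesgue A) (cbox (kappa a) (kappa b))" by simp
  moreover have "(\<lambda>x. if x \<in> cbox (kappa a) (kappa b) then indicat_real (kappa ` A) x else 0) = indicat_real (kappa ` A)"
  proof -
    have "kappa ` A \<subseteq> cbox (kappa a) (kappa b)" by (metis Ab image_mono kappa_image_cbox)
    then show ?thesis by (auto simp: fun_eq_iff indicator_def)
  qed
  ultimately have "(indicat_real (kappa ` A) has_integral measure lebesgue A) UNIV"
    using has_integral_restrict_UNIV[of "cbox (kappa a) (kappa b)" "indicat_real (kappa ` A)"] by simp
  then have "kappa ` A \<in> lmeasurable \<and> measure lebesgue A = measure lebesgue (kappa ` A)"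
    using lmeasurable_iff_indicator_has_integral[of "kappa ` A" "measure lebesgue A"] by simp
  then show "kappa ` A \<in> lmeasurable" "measure lebesgue (kappa ` A) = measure lebesgue A" by auto
qed


definition det2 :: "(real \<times> real \<Rightarrow> real \<times> real) \<Rightarrow> real" where
  "det2 L = fst (L (1,0)) * snd (L (0,1)) - fst (L (0,1)) * snd (L (1,0))"

lemma iota_axis: "iota (axis 1 1) = (1,0)" "iota (axis 2 1) = (0,1)"
  by (simp_all add: iota_def axis_def)

lemma det_matrix_conj:
  "det (matrix (\<lambda>y. kappa (L (iota y)))) = det2 L"
  unfolding det_2 det2_def by (simp add: matrix_def iota_axis)

lemma measure_image_pair:
  fixes f :: "real \<times> real \<Rightarrow> real \<times> real" and f' :: "real \<times> real \<Rightarrow> real \<times> real \<Rightarrow> real \<times> real"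
  assumes der: "\<And>x. x \<in> cbox a b \<Longrightarrow> (f has_derivative f' x) (at x within cbox a b)"
    and J: "continuous_on (cbox a b) (\<lambda>x. \<bar>det2 (f' x)\<bar>)"
    and cf: "continuous_on (cbox a b) f"
  shows "measure lebesgue (f ` cbox a b) \<le> integral (cbox a b) (\<lambda>x. \<bar>det2 (f' x)\<bar>)"
proof -
  define S2 where "S2 = cbox (kappa a) (kappa b)"
  define F where "F = (\<lambda>x. kappa (f (iota x)))"
  define F' where "F' = (\<lambda>x y. kappa (f' (iota x) (iota y)))"
  have S2: "S2 = kappa ` cbox a b" unfolding S2_def by (rule kappa_image_cbox[symmetric])
  have iS2: "iota ` S2 = cbox a b" unfolding S2 image_comp by simp
  have dF: "(F has_derivative F' x) (at x within S2)" if x: "x \<in> S2" for x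
  proof -
    have ix: "iota x \<in> cbox a b" using x iS2 by blast
    have "((f \<circ> iota) has_derivative (f' (iota x) \<circ> iota)) (at x within S2)"
      by (rule diff_chain_within[OF bounded_linear_imp_has_derivative[OF bl_iota]]) (simp add: iS2 der ix)
    then have "((kappa \<circ> (f \<circ> iota)) has_derivative (kappa \<circ> (f' (iota x) \<circ> iota))) (at x within S2)"
      by (rule diff_chain_within) (rule bounded_linear_imp_has_derivative[OF bl_kappa])
    then show ?thesis by (simp add: F_def F'_def o_def)
  qed
  define J' where "J' = (\<lambda>x. \<bar>det2 (f' x)\<bar>)"
  have "(J' has_integral integral (cbox a b) J') (cbox a b)"
    using J unfolding J'_def by (intro integrable_integral integrable_continuous)
  then have hi: "((\<lambda>x. J' (iota x)) has_integral integral (cbox a b) J') S2"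
    unfolding S2_def by (rule transfer_has_integral)
  have dete: "\<bar>det (matrix (F' x))\<bar> = J' (iota x)" for x
    unfolding F'_def J'_def by (simp add: det_matrix_conj)
  have int: "(\<lambda>x. \<bar>det (matrix (F' x))\<bar>) integrable_on S2" using hi unfolding dete by blast
  have "measure lebesgue (F ` S2) \<le> integral S2 (\<lambda>x. \<bar>det (matrix (F' x))\<bar>)"
    by (rule measure_differentiable_image[OF _ dF int]) (simp add: S2_def)
  also have "\<dots> = integral (cbox a b) J'" unfolding dete using hi by (simp add: integral_unique)
  also have "F ` S2 = kappa ` (f ` cbox a b)" unfolding S2 F_def by (simp add: image_comp o_def)
  finally have le: "measure lebesgue (kappa ` (f ` cbox a b)) \<le> integral (cbox a b) J'" .
  have cK: "compact (f ` cbox a b)" by (rule compact_continuous_image[OF cf]) simp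
  then obtain c where c: "f ` cbox a b \<subseteq> cbox (-c) c"
    using bounded_subset_cbox_symmetric compact_imp_bounded by metis
  have "measure lebesgue (kappa ` (f ` cbox a b)) = measure lebesgue (f ` cbox a b)"
    by (rule transfer_measure(2)[OF lmeasurable_compact[OF cK] c])
  then show ?thesis using le unfolding J'_def by simp
qed

lemma support_ineq0:
  assumes ov: "oval_support h" and ts: "\<bar>t - s\<bar> \<le> pi"
  shows "h t * cos (t - s) - deriv h t * sin (t - s) \<le> h s"
proof -
  note F = oval_facts[OF ov]
  define phi where "phi t = h t * cos (t - s) - deriv h t * sin (t - s)" for t
  have dphi: "(phi has_real_derivative - (h x + deriv (deriv h) x) * sin (x - s)) (at x)" for x
  proof -
    have "(phi has_real_derivative (deriv h x * cos (x - s) - h x * sin (x - s) - (deriv (deriv h) x * sin (x - s) + deriv h x * cos (x - s)))) (at x)"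
      unfolding phi_def by (auto intro!: derivative_eq_intros F(4) F(5))
    then show ?thesis by (simp add: algebra_simps)
  qed
  have cphi: "continuous_on A phi" for A
    using dphi DERIV_isCont continuous_at_imp_continuous_on by blast
  have ps: "phi s = h s" by (simp add: phi_def)
  show ?thesis
  proof (cases "t \<le> s")
    case True
    have "phi t \<le> phi s"
    proof (rule DERIV_nonneg_imp_increasing_open[OF True _ cphi])
      fix x assume x: "t < x" "x < s"
      have "sin (s - x) \<ge> 0" using x ts True by (intro sin_ge_zero) auto
      moreover have "sin (x - s) = - sin (s - x)" by (metis minus_diff_eq sin_minus)
      ultimately have e: "- (h x + deriv (deriv h) x) * sin (x - s) = (h x + deriv (deriv h) x) * sin (s - x)"
        by (simp add: algebra_simps)
      have "(h x + deriv (deriv h) x) * sin (s - x) \<ge> 0"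
        using F(7)[of x] \<open>sin (s - x) \<ge> 0\<close> by (intro mult_nonneg_nonneg) auto
      then have "- (h x + deriv (deriv h) x) * sin (x - s) \<ge> 0" using e by simp
      then show "\<exists>y. DERIV phi x :> y \<and> y \<ge> 0" using dphi by blast
    qed
    then show ?thesis using ps by (simp add: phi_def)
  next
    case False
    then have st: "s \<le> t" by simp
    have "phi s \<ge> phi t"
    proof (rule DERIV_nonpos_imp_decreasing_open[OF st _ cphi])
      fix x assume x: "s < x" "x < t"
      have "sin (x - s) \<ge> 0" using x ts False by (intro sin_ge_zero) auto
      then have "(h x + deriv (deriv h) x) * sin (x - s) \<ge> 0"
        using F(7)[of x] by (intro mult_nonneg_nonneg) auto
      then have "- (h x + deriv (deriv h) x) * sin (x - s) \<le> 0" by (simp only: mult_minus_left neg_le_0_iff_le)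
      then show "\<exists>y. DERIV phi x :> y \<and> y \<le> 0" using dphi by blast
    qed
    then show ?thesis using ps by (simp add: phi_def)
  qed
qed

lemma support_ineq:
  assumes ov: "oval_support h"
  shows "h 0 * cos s + deriv h 0 * sin s \<le> h s"
proof -
  note F = oval_facts[OF ov]
  define m where "m = round (s / (2*pi))"
  define s' where "s' = s - 2*pi * of_int m"
  have "\<bar>s / (2*pi) - of_int m\<bar> \<le> 1/2" unfolding m_def using of_int_round_abs_le[of "s / (2*pi)"] by (simp add: abs_minus_commute)
  then have "\<bar>s' / (2*pi)\<bar> \<le> 1/2" unfolding s'_def by (simp add: diff_divide_distrib)
  then have "\<bar>s'\<bar> \<le> pi" by (simp add: abs_divide field_simps)
  then have "h 0 * cos (0 - s') - deriv h 0 * sin (0 - s') \<le> h s'"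
    by (intro support_ineq0[OF ov]) auto
  moreover have "s = s' + 2*pi * of_int m" unfolding s'_def by simp
  moreover have "cos (s' + 2*pi * of_int m) = cos s'" "sin (s' + 2*pi * of_int m) = sin s'" "h (s' + 2*pi * of_int m) = h s'"
    by (rule per_int; simp add: F(1))+
  ultimately show ?thesis by simp
qed

lemma uvec_deriv: "(uvec has_vector_derivative uvec' s) (at s)"
proof -
  have "((\<lambda>s. (cos s, sin s)) has_vector_derivative (- sin s, cos s)) (at s)"
    by (intro has_vector_derivative_Pair)
       (auto intro!: derivative_eq_intros simp: has_real_derivative_iff_has_vector_derivative[symmetric])
  then show ?thesis unfolding uvec_def uvec'_def by (simp add: fun_eq_iff)
qed

lemma uvec'_deriv: "(uvec' has_vector_derivative - uvec s) (at s)"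
proof -
  have "((\<lambda>s. (- sin s, cos s)) has_vector_derivative (- cos s, - sin s)) (at s)"
    by (intro has_vector_derivative_Pair)
       (auto intro!: derivative_eq_intros simp: has_real_derivative_iff_has_vector_derivative[symmetric])
  then show ?thesis unfolding uvec_def uvec'_def by (simp add: fun_eq_iff)
qed

lemma norm_uvec'[simp]: "norm (uvec' s) = 1"
  by (simp add: uvec'_def norm_Pair)

lemma oval_curve_deriv:
  assumes "oval_support h"
  shows "(oval_curve h has_vector_derivative ((h s + deriv (deriv h) s) *\<^sub>R uvec' s)) (at s)"
proof -
  note F = oval_facts[OF assms]
  have "((\<lambda>s. h s *\<^sub>R uvec s + deriv h s *\<^sub>R uvec' s) has_vector_derivative
     ((h s *\<^sub>R uvec' s + deriv h s *\<^sub>R uvec s) + (deriv h s *\<^sub>R (- uvec s) + deriv (deriv h) s *\<^sub>R uvec' s))) (at s)"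
    by (intro has_vector_derivative_add has_vector_derivative_scaleR F(4) F(5) uvec_deriv uvec'_deriv)
  moreover have "(h s *\<^sub>R uvec' s + deriv h s *\<^sub>R uvec s) + (deriv h s *\<^sub>R (- uvec s) + deriv (deriv h) s *\<^sub>R uvec' s)
     = (h s + deriv (deriv h) s) *\<^sub>R uvec' s"
    by (simp add: algebra_simps)
  ultimately show ?thesis unfolding oval_curve_def[abs_def] by simp
qed


lemma inside_ray:
  fixes C :: "(real \<times> real) set"
  assumes p: "p \<in> C" and x: "x \<in> inside C"
  shows "\<exists>l\<ge>1. p + l *\<^sub>R (x - p) \<in> C"
proof (rule ccontr)
  assume nc: "\<not> (\<exists>l\<ge>1. p + l *\<^sub>R (x - p) \<in> C)"
  from x have xC: "x \<notin> C" and bd: "bounded (connected_component_set (- C) x)"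
    unfolding inside_def by auto
  define R where "R = (\<lambda>l. p + l *\<^sub>R (x - p)) ` {1..}"
  have "connected R" unfolding R_def
    by (rule connected_continuous_image) (auto intro!: continuous_intros simp: connected_iff_interval)
  moreover have "x \<in> R" unfolding R_def by (rule image_eqI[of _ _ 1]) auto
  moreover have "R \<subseteq> - C" using nc unfolding R_def by auto
  ultimately have "R \<subseteq> connected_component_set (- C) x" by (intro connected_component_maximal)
  then have "bounded R" using bd bounded_subset by blast
  then obtain B where B: "\<And>y. y \<in> R \<Longrightarrow> norm y \<le> B" unfolding bounded_iff by blast
  have xp: "norm (x - p) > 0" using xC p by auto
  define l where "l = max 1 ((B + norm p + 1) / norm (x - p))"
  have l1: "l \<ge> 1" unfolding l_def by simp
  have "l * norm (x - p) \<ge> B + norm p + 1"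
    using xp unfolding l_def by (simp add: field_simps max_def)
  moreover have "norm (p + l *\<^sub>R (x - p)) \<ge> l * norm (x - p) - norm p"
    using norm_diff_ineq[of "l *\<^sub>R (x - p)" p] l1 by (simp add: add.commute)
  moreover have "norm (p + l *\<^sub>R (x - p)) \<le> B" using B[of "p + l *\<^sub>R (x - p)"] l1 unfolding R_def by auto
  ultimately show False by linarith
qed


lemma integral_t01: "integral {0..1} (\<lambda>t::real. t) = 1/2"
proof -
  have "((\<lambda>t::real. t) has_integral (1^2/2 - 0^2/2)) {0..1}"
    by (rule fundamental_theorem_of_calculus)
       (auto intro!: derivative_eq_intros simp: has_real_derivative_iff_has_vector_derivative[symmetric])
  then show ?thesis by (simp add: integral_unique)
qed

lemma area_bound:
  assumes ov: "oval_support h"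
  shows "oval_area h \<le> (ip h h - ip (deriv h) (deriv h)) / 2"
proof -
  note F = oval_facts[OF ov]
  define h1 where "h1 = deriv h"
  define h2 where "h2 = deriv h1"
  have hd: "\<And>s. (h has_real_derivative h1 s) (at s)" unfolding h1_def by (rule F(4))
  have h1d: "\<And>s. (h1 has_real_derivative h2 s) (at s)" unfolding h1_def h2_def by (rule F(5))
  have per: "\<forall>x. h (x + 2*pi) = h x" by (rule F(1))
  have per1: "\<forall>x. h1 (x + 2*pi) = h1 x" unfolding h1_def by (rule F(2))
  have ch: "continuous_on UNIV h" by (rule deriv_cont[OF hd])
  have ch1: "continuous_on UNIV h1" by (rule deriv_cont[OF h1d])
  have ch2: "continuous_on UNIV h2" unfolding h2_def h1_def by (rule F(6))
  have pos: "\<And>s. h s + h2 s > 0" unfolding h2_def h1_def by (rule F(7))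
  define Cv where "Cv = oval_curve h"
  define C where "C = Cv ` {0..2*pi}"
  define p where "p = Cv 0"
  have p: "p = (h 0, h1 0)" unfolding p_def Cv_def oval_curve_def uvec_def uvec'_def h1_def by simp
  define CvD where "CvD s = (h s + h2 s) *\<^sub>R uvec' s" for s
  have Od: "(Cv has_vector_derivative CvD s) (at s)" for s
    unfolding Cv_def CvD_def h2_def h1_def by (rule oval_curve_deriv[OF ov])
  have cO: "continuous_on A Cv" for A
    using Od has_vector_derivative_continuous continuous_at_imp_continuous_on by blast
  have Oc: "fst (Cv s) * cos s + snd (Cv s) * sin s = h s" for s
  proof -
    have c: "fst (Cv s) = h s * cos s - h1 s * sin s" "snd (Cv s) = h s * sin s + h1 s * cos s"
      unfolding Cv_def oval_curve_def uvec_def uvec'_def h1_def by simp_all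
    have "(h s * cos s - h1 s * sin s) * cos s + (h s * sin s + h1 s * cos s) * sin s = h s * ((sin s)^2 + (cos s)^2)"
      by algebra
    then show ?thesis unfolding c sin_cos_squared_add by simp
  qed
  define Phi where "Phi z = p + fst z *\<^sub>R (Cv (snd z) - p)" for z :: "real \<times> real"
  define Phi' where "Phi' z d = fst d *\<^sub>R (Cv (snd z) - p) + fst z *\<^sub>R (snd d *\<^sub>R CvD (snd z))" for z d :: "real \<times> real"
  define K where "K = cbox (0::real, 0::real) (1, 2*pi)"
  have dPhi: "(Phi has_derivative Phi' z) (at z)" for z
  proof -
    have d1: "((\<lambda>z. Cv (snd z)) has_derivative (\<lambda>d. snd d *\<^sub>R CvD (snd z))) (at z)"
      using diff_chain_at[OF has_derivative_snd[OF has_derivative_ident] Od[of "snd z", unfolded has_vector_derivative_def]]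
      by (simp add: o_def)
    have d2: "((\<lambda>z. Cv (snd z) - p) has_derivative (\<lambda>d. snd d *\<^sub>R CvD (snd z))) (at z)"
      using has_derivative_diff[OF d1 has_derivative_const[of p]] by simp
    have d3: "((\<lambda>z. fst z *\<^sub>R (Cv (snd z) - p)) has_derivative
        (\<lambda>d. fst z *\<^sub>R (snd d *\<^sub>R CvD (snd z)) + fst d *\<^sub>R (Cv (snd z) - p))) (at z)"
      by (rule has_derivative_scaleR[OF has_derivative_fst[OF has_derivative_ident] d2])
    have "((\<lambda>z. p + fst z *\<^sub>R (Cv (snd z) - p)) has_derivative
        (\<lambda>d. 0 + (fst z *\<^sub>R (snd d *\<^sub>R CvD (snd z)) + fst d *\<^sub>R (Cv (snd z) - p)))) (at z)"
      by (rule has_derivative_add[OF has_derivative_const d3])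
    then show ?thesis unfolding Phi_def Phi'_def by (simp add: add.commute)
  qed
  have cPhi: "continuous_on A Phi" for A
    using dPhi has_derivative_continuous continuous_at_imp_continuous_on by blast
  define w where "w s = (h s + h2 s) * (h s - (h 0 * cos s + h1 0 * sin s))" for s
  have wnn: "w s \<ge> 0" for s
    using support_ineq[OF ov, of s] pos[of s] unfolding w_def h1_def by (intro mult_nonneg_nonneg) auto
  have cw: "continuous_on UNIV w" unfolding w_def by (intro continuous_intros ch ch1 ch2)
  have det: "det2 (Phi' z) = fst z * w (snd z)" for z
  proof -
    have "det2 (Phi' z) = fst z * (h (snd z) + h2 (snd z)) * ((fst (Cv (snd z)) * cos (snd z) + snd (Cv (snd z)) * sin (snd z)) - (fst p * cos (snd z) + snd p * sin (snd z)))"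
      unfolding det2_def Phi'_def CvD_def uvec'_def by (simp add: algebra_simps)
    then show ?thesis unfolding Oc w_def p by simp
  qed
  have cover: "inside C \<subseteq> Phi ` K"
  proof
    fix y assume y: "y \<in> inside C"
    have pC: "p \<in> C" unfolding C_def p_def by auto
    obtain l where l: "l \<ge> 1" "p + l *\<^sub>R (y - p) \<in> C" using inside_ray[OF pC y] by blast
    then obtain s where s: "s \<in> {0..2*pi}" "p + l *\<^sub>R (y - p) = Cv s" unfolding C_def by auto
    have e: "Cv s - p = l *\<^sub>R (y - p)" using s(2) by (metis add_diff_cancel_left')
    have "(1/l) *\<^sub>R (Cv s - p) = y - p" using l(1) unfolding e by simp
    then have "y = Phi (1/l, s)" unfolding Phi_def by simp
    moreover have "(1/l, s) \<in> K" unfolding K_def using l s by auto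
    ultimately show "y \<in> Phi ` K" by blast
  qed
  have cK: "compact (Phi ` K)" unfolding K_def by (intro compact_continuous_image cPhi) simp
  have m1: "measure lebesgue (inside C) \<le> measure lebesgue (Phi ` K)"
  proof (rule measure_mono_fmeasurable[OF cover])
    have "closed C" unfolding C_def by (intro compact_imp_closed compact_continuous_image cO) simp
    then have "open (inside C)" by (rule open_inside)
    moreover have "bounded (inside C)" using cover cK compact_imp_bounded bounded_subset by blast
    ultimately show "inside C \<in> sets lebesgue" using lmeasurable_open fmeasurableD by blast
    show "Phi ` K \<in> fmeasurable lebesgue" using lmeasurable_compact[OF cK] .
  qed
  have m2: "measure lebesgue (Phi ` K) \<le> integral K (\<lambda>z. \<bar>det2 (Phi' z)\<bar>)"
    unfolding K_def
  proof (rule measure_image_pair)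
    show "(Phi has_derivative Phi' x) (at x within cbox (0, 0) (1, 2 * pi))" for x
      using dPhi has_derivative_at_withinI by blast
    show "continuous_on (cbox (0, 0) (1, 2 * pi)) (\<lambda>x. \<bar>det2 (Phi' x)\<bar>)"
      unfolding det by (intro continuous_intros continuous_on_compose2[OF cw]) auto
    show "continuous_on (cbox (0, 0) (1, 2 * pi)) Phi" by (rule cPhi)
  qed
  have "integral K (\<lambda>z. \<bar>det2 (Phi' z)\<bar>) = integral K (\<lambda>z. fst z * w (snd z))"
  proof (rule integral_cong)
    fix z assume "z \<in> K"
    then have "fst z \<ge> 0" unfolding K_def by (cases z) auto
    then show "\<bar>det2 (Phi' z)\<bar> = fst z * w (snd z)" unfolding det using wnn by simp
  qed
  also have "\<dots> = integral (cbox 0 1) (\<lambda>t. integral (cbox 0 (2*pi)) (\<lambda>s. fst (t, s) * w (snd (t, s))))"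
    unfolding K_def
    by (rule integral_prod_continuous) (intro continuous_intros continuous_on_compose2[OF cw]; auto)
  also have "\<dots> = integral {0..1} (\<lambda>t. t * integral {0..2*pi} w)"
    by (simp add: cbox_interval)
  also have "\<dots> = integral {0..2*pi} w / 2"
    using integral_t01 by (simp add: mult.commute[of _ "integral {0..2*pi} w"])
  finally have m3: "integral K (\<lambda>z. \<bar>det2 (Phi' z)\<bar>) = integral {0..2*pi} w / 2" .
  have hh2: "ip h2 h = - ip h1 h1"
  proof -
    have "integral {0..2*pi} (\<lambda>s. h2 s * h s + h1 s * h1 s) = 0"
      by (rule ftc_zero[where F="\<lambda>s. h1 s * h s"]) (auto intro!: derivative_eq_intros hd h1d simp: per[rule_format, of 0, simplified] per1[rule_format, of 0, simplified])
    moreover have "integral {0..2*pi} (\<lambda>s. h2 s * h s + h1 s * h1 s) = ip h2 h + ip h1 h1"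
      unfolding ip_def by (rule integral_add) (auto intro!: integrable_cont continuous_intros ch ch1 ch2)
    ultimately show ?thesis by simp
  qed
  have bp1: "FA h1 1 = FB h 1" "FB h1 1 = - FA h 1" using by_parts_cc[OF per hd ch1, of 1] by simp_all
  have bp2: "FA h2 1 = FB h1 1" "FB h2 1 = - FA h1 1" using by_parts_cc[OF per1 h1d ch2, of 1] by simp_all
  have wc: "ip (\<lambda>s. h s + h2 s) (cc 1) = 0" "ip (\<lambda>s. h s + h2 s) (ss 1) = 0"
    using bp1 bp2 by (simp_all add: ip_add_left ch ch2 continuous_intros FA_def FB_def)
  have "integral {0..2*pi} w = ip (\<lambda>s. h s + h2 s) h - (h 0 * ip (\<lambda>s. h s + h2 s) (cc 1) + h1 0 * ip (\<lambda>s. h s + h2 s) (ss 1))"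
  proof -
    have e: "w = (\<lambda>s. (h s + h2 s) * h s - (h 0 * ((h s + h2 s) * cc 1 s) + h1 0 * ((h s + h2 s) * ss 1 s)))"
      by (auto simp: fun_eq_iff w_def cc_def ss_def algebra_simps)
    show ?thesis unfolding e ip_def
      by (subst integral_diff integral_add integral_mult_right;
          auto intro!: integrable_cont continuous_intros ch ch1 ch2)+
  qed
  also have "\<dots> = ip h h - ip h1 h1"
    using wc hh2 by (simp add: ip_add_left ch ch2 continuous_intros)
  finally have m4: "integral {0..2*pi} w = ip h h - ip h1 h1" .
  show ?thesis
    unfolding oval_area_def using m1 m2 m3 m4 unfolding C_def Cv_def h1_def by simp
qed

lemma length_eq:
  assumes "oval_support h"
  shows "oval_length h = integral {0..2*pi} h"
proof -
  note F = oval_facts[OF assms]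
  have ch: "continuous_on UNIV h" by (rule deriv_cont[OF F(4)])
  have "norm (vector_derivative (oval_curve h) (at s)) = h s + deriv (deriv h) s" for s
    using vector_derivative_at[OF oval_curve_deriv[OF assms, of s]] F(7)[of s] by simp
  then have "oval_length h = integral {0..2*pi} (\<lambda>s. h s + deriv (deriv h) s)"
    unfolding oval_length_def by simp
  also have "\<dots> = integral {0..2*pi} h + integral {0..2*pi} (deriv (deriv h))"
    by (rule integral_add) (auto intro: integrable_cont ch F(6))
  also have "integral {0..2*pi} (deriv (deriv h)) = 0"
    by (rule ftc_zero[OF F(5)]) (use F(2)[rule_format, of 0] in simp)
  finally show ?thesis by simp
qed


lemma ip_scale_right: "ip f (\<lambda>s. c * g s) = c * ip f g"
  unfolding ip_def by (simp add: algebra_simps)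

lemma ip_orth3:
  assumes c: "continuous_on UNIV a" "continuous_on UNIV b" "continuous_on UNIV c"
    and o: "ip a b = 0" "ip a c = 0" "ip b c = 0"
  shows "ip (\<lambda>s. a s + b s + c s) (\<lambda>s. a s + b s + c s) = ip a a + ip b b + ip c c"
proof -
  have cab: "continuous_on UNIV (\<lambda>s. a s + b s)" by (intro continuous_intros c)
  have "ip (\<lambda>s. a s + b s + c s) (\<lambda>s. a s + b s + c s) = ip (\<lambda>s. a s + b s) (\<lambda>s. a s + b s) + 2 * ip (\<lambda>s. a s + b s) c + ip c c"
    using ip_sq_add[OF cab c(3)] by simp
  also have "ip (\<lambda>s. a s + b s) (\<lambda>s. a s + b s) = ip a a + 2 * ip a b + ip b b" by (rule ip_sq_add[OF c(1,2)])
  also have "ip (\<lambda>s. a s + b s) c = ip a c + ip b c" by (rule ip_add_left[OF c])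
  finally show ?thesis using o by simp
qed

lemma ip_orth4:
  assumes c: "continuous_on UNIV a" "continuous_on UNIV b" "continuous_on UNIV c" "continuous_on UNIV d"
    and o: "ip a b = 0" "ip a c = 0" "ip a d = 0" "ip b c = 0" "ip b d = 0" "ip c d = 0"
  shows "ip (\<lambda>s. a s + b s + c s + d s) (\<lambda>s. a s + b s + c s + d s) = ip a a + ip b b + ip c c + ip d d"
proof -
  have cabc: "continuous_on UNIV (\<lambda>s. a s + b s + c s)" by (intro continuous_intros c)
  have "ip (\<lambda>s. a s + b s + c s + d s) (\<lambda>s. a s + b s + c s + d s) = ip (\<lambda>s. a s + b s + c s) (\<lambda>s. a s + b s + c s) + 2 * ip (\<lambda>s. a s + b s + c s) d + ip d d"
    using ip_sq_add[OF cabc c(4)] by simp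
  also have "ip (\<lambda>s. a s + b s + c s) (\<lambda>s. a s + b s + c s) = ip a a + ip b b + ip c c" by (rule ip_orth3[OF c(1-3) o(1,2,4)])
  also have "ip (\<lambda>s. a s + b s + c s) d = ip a d + ip b d + ip c d"
    using ip_add_left[OF c(1,2) c(4)] ip_add_left[OF _ c(3,4), of "\<lambda>s. a s + b s"] by (simp add: continuous_intros c)
  finally show ?thesis using o by simp
qed

theorem theorem5p7:
  fixes k :: nat and h :: "real \<Rightarrow> real"
  assumes "k > 2"
    and "oval_support h"
  shows "(oval_length h)\<^sup>2 - 4 * pi * oval_area h - 4 * pi * \<bar>ops_area k h\<bar>
           \<ge> 6 * pi * (d2 h (\<lambda>s. ops_support k h s + steiner_disk_support h s))\<^sup>2"
proof -
  note F = oval_facts[OF assms(2)]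
  define h1 where "h1 = deriv h"
  have per: "\<forall>x. h (x + 2*pi) = h x" by (rule F(1))
  have per1: "\<forall>x. h1 (x + 2*pi) = h1 x" unfolding h1_def by (rule F(2))
  have hd: "\<And>s. (h has_real_derivative h1 s) (at s)" unfolding h1_def by (rule F(4))
  have h1d: "\<And>s. (h1 has_real_derivative deriv h1 s) (at s)" unfolding h1_def by (rule F(5))
  have ch: "continuous_on UNIV h" by (rule deriv_cont[OF hd])
  have ch1: "continuous_on UNIV h1" by (rule deriv_cont[OF h1d])
  have k2: "k \<ge> 2" and k1: "k \<ge> 1" using assms(1) by auto
  define a0 where "a0 = avg_width h / 2"
  define a1 where "a1 = steiner_a1 h"
  define b1 where "b1 = steiner_b1 h"
  have cc0: "cc 0 s = 1" for s by (simp add: cc_def)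
  have cc1: "cc 1 s = cos s" for s by (simp add: cc_def)
  have ss1: "ss 1 s = sin s" for s by (simp add: ss_def)
  have Ih: "ip h (cc 0) = 2*pi*a0" unfolding a0_def avg_width_def ip_def by (simp add: cc0)
  have A1: "ip h (cc 1) = pi * a1" unfolding a1_def steiner_a1_def ip_def cc1 by simp
  have B1: "ip h (ss 1) = pi * b1" unfolding b1_def steiner_b1_def ip_def ss1 by simp
  have A1': "ip h1 (cc 1) = pi * b1" using by_parts_cc(1)[OF per hd ch1, of 1] B1 by (simp add: FA_def FB_def)
  have B1': "ip h1 (ss 1) = - pi * a1" using by_parts_cc(2)[OF per hd ch1, of 1] A1 by (simp add: FA_def FB_def)
  define P where "P = Pk k h"
  define P1 where "P1 = Pk k h1"
  have cP: "continuous_on UNIV P" unfolding P_def by (intro continuous_intros ch)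
  have cP1: "continuous_on UNIV P1" unfolding P1_def by (intro continuous_intros ch1)
  have perP: "\<forall>x. P (x + 2*pi) = P x" unfolding P_def by (rule per_Pk[OF per])
  have Pd: "\<And>s. (P has_real_derivative P1 s) (at s)" unfolding P_def P1_def by (rule deriv_Pk[OF hd])
  have PP: "ip P P = ip h P" unfolding P_def by (rule ip_Pk_Pk[OF per ch k1])
  have P1P1: "ip P1 P1 = ip h1 P1" unfolding P1_def by (rule ip_Pk_Pk[OF per1 ch1 k1])
  have P0: "ip P (cc 0) = 2*pi*a0"
    using int_Pk[OF per ch k1] Ih unfolding P_def ip_def by (simp add: cc0)
  have Pc: "ip P (cc 1) = 0" "ip P (ss 1) = 0" unfolding P_def by (rule ip_Pk_trig[OF per ch k2])+
  have P1c: "ip P1 (cc 1) = 0" "ip P1 (ss 1) = 0" unfolding P1_def by (rule ip_Pk_trig[OF per1 ch1 k2])+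
  have T: "ip (cc 0) (cc 0) = 2*pi" "ip (cc 0) (cc 1) = 0" "ip (cc 0) (ss 1) = 0"
     "ip (cc 1) (cc 1) = pi" "ip (ss 1) (ss 1) = pi" "ip (cc 1) (ss 1) = 0"
    by (simp_all add: ip_cc_cc ip_ss_ss ip_cc_ss)
  have Ts: "ip (cc 1) (cc 0) = 0" "ip (ss 1) (cc 0) = 0" "ip (ss 1) (cc 1) = 0"
    by (simp_all add: ip_cc_cc ip_ss_ss ip_ss_cc)
  have sym1: "ip (cc 0) P = 2*pi*a0" "ip (cc 1) P = 0" "ip (ss 1) P = 0" "ip (cc 1) P1 = 0" "ip (ss 1) P1 = 0"
     "ip (cc 0) h = 2*pi*a0" "ip (cc 1) h = pi * a1" "ip (ss 1) h = pi * b1"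
     "ip (cc 1) h1 = pi * b1" "ip (ss 1) h1 = - pi * a1" "ip P h = ip P P" "ip P1 h1 = ip P1 P1"
    using P0 Pc P1c Ih A1 B1 A1' B1' PP P1P1 by (simp_all add: ip_sym)
  note N0 = T Ts sym1 P0 Pc P1c A1 B1 A1' B1' Ih PP P1P1
  note N = N0 N0[simplified]
  note ipL = ip_add_left ip_diff_left ip_add_right ip_diff_right ip_scale_left ip_scale_right
  note conts = cP cP1 ch ch1 cont_cc cont_ss
  define C where "C = (\<lambda>s. a0 * cc 0 s)"
  define q0 where "q0 = (\<lambda>s. P s - a0 * cc 0 s)"
  define E where "E = (\<lambda>s. a1 * cc 1 s + b1 * ss 1 s)"
  define g where "g = (\<lambda>s. h s - P s - E s)"
  define E' where "E' = (\<lambda>s. b1 * cc 1 s - a1 * ss 1 s)"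
  define g' where "g' = (\<lambda>s. h1 s - P1 s - E' s)"
  have cC: "continuous_on UNIV C" and cq0: "continuous_on UNIV q0" and cE: "continuous_on UNIV E"
    and cg: "continuous_on UNIV g" and cE': "continuous_on UNIV E'" and cg': "continuous_on UNIV g'"
    unfolding C_def q0_def E_def g_def E'_def g'_def by (intro continuous_intros conts)+
  have o1: "ip C q0 = 0" unfolding C_def q0_def
    by (simp add: ipL conts continuous_intros N P0)
  have o2: "ip C E = 0" unfolding C_def E_def
    by (simp add: ipL conts continuous_intros N)
  have o3: "ip C g = 0" unfolding C_def g_def E_def
    by (simp add: ipL conts continuous_intros N)
  have o4: "ip q0 E = 0" unfolding q0_def E_def
    by (simp add: ipL conts continuous_intros N Pc)
  have o5: "ip q0 g = 0" unfolding q0_def g_def E_def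
    by (simp add: ipL conts continuous_intros N Pc P0 Ih PP)
  have o6: "ip E g = 0" unfolding g_def E_def
    by (simp add: ipL conts continuous_intros N Pc A1 B1 algebra_simps)
  have o7: "ip P1 E' = 0" unfolding E'_def
    by (simp add: ipL conts continuous_intros N P1c)
  have o8: "ip P1 g' = 0" unfolding g'_def E'_def
    by (simp add: ipL conts continuous_intros N P1c P1P1)
  have o9: "ip E' g' = 0" unfolding g'_def E'_def
    by (simp add: ipL conts continuous_intros N P1c A1' B1' algebra_simps)
  have sC: "ip C C = 2*pi*a0^2" unfolding C_def
    by (simp add: ipL conts continuous_intros N power2_eq_square)
  have sE: "ip E E = pi * (a1^2 + b1^2)" unfolding E_def
    by (simp add: ipL conts continuous_intros N power2_eq_square algebra_simps)
  have sE': "ip E' E' = pi * (a1^2 + b1^2)" unfolding E'_def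
    by (simp add: ipL conts continuous_intros N power2_eq_square algebra_simps)
  have "ip (\<lambda>s. C s + q0 s + E s + g s) (\<lambda>s. C s + q0 s + E s + g s) = ip h h"
    by (simp add: C_def q0_def E_def g_def)
  then have Hh: "ip h h = 2*pi*a0^2 + ip q0 q0 + pi*(a1^2+b1^2) + ip g g"
    using ip_orth4[OF cC cq0 cE cg o1 o2 o3 o4 o5 o6] sC sE by simp
  have "ip (\<lambda>s. P1 s + E' s + g' s) (\<lambda>s. P1 s + E' s + g' s) = ip h1 h1"
    by (simp add: g'_def)
  then have Hh1: "ip h1 h1 = ip P1 P1 + pi*(a1^2+b1^2) + ip g' g'"
    using ip_orth3[OF cP1 cE' cg' o7 o8 o9] sE' by simp
  have gd: "\<And>s. (g has_real_derivative g' s) (at s)"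
    unfolding g_def g'_def E_def E'_def cc_def ss_def by (auto intro!: derivative_eq_intros hd Pd)
  have perg: "\<forall>x. g (x + 2*pi) = g x"
    using per perP by (simp add: g_def E_def cc_def ss_def)
  have Wg: "4 * ip g g \<le> ip g' g'"
  proof (rule wirtinger2[OF perg gd cg'])
    show "FA g 0 = 0" "FA g 1 = 0" "FB g 1 = 0" unfolding FA_def FB_def g_def E_def
      by (simp_all add: ipL conts continuous_intros N)
  qed
  have q0d: "\<And>s. (q0 has_real_derivative P1 s) (at s)"
    unfolding q0_def cc_def by (auto intro!: derivative_eq_intros Pd)
  have perq0: "\<forall>x. q0 (x + 2*pi) = q0 x"
    using perP by (simp add: q0_def cc_def)
  have Wq: "4 * ip q0 q0 \<le> ip P1 P1"
  proof (rule wirtinger2[OF perq0 q0d cP1])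
    show "FA q0 0 = 0" "FA q0 1 = 0" "FB q0 1 = 0" unfolding FA_def FB_def q0_def
      by (simp_all add: ipL conts continuous_intros N)
  qed
  have ops: "ops_support k h = q0"
    by (auto simp: fun_eq_iff ops_support_def q0_def P_def Pk_def a0_def cc0)
  have dops: "deriv (ops_support k h) s = P1 s" for s
    unfolding ops by (rule DERIV_imp_deriv[OF q0d])
  have opsA: "ops_area k h = (ip q0 q0 - ip P1 P1) / 2"
  proof -
    have "integral {0..2*pi} (\<lambda>s. (ops_support k h s)\<^sup>2 - (deriv (ops_support k h) s)\<^sup>2)
       = integral {0..2*pi} (\<lambda>s. q0 s * q0 s - P1 s * P1 s)"
      by (simp add: ops dops[unfolded ops] power2_eq_square)
    also have "\<dots> = ip q0 q0 - ip P1 P1" unfolding ip_def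
      by (rule integral_diff) (auto intro!: integrable_cont continuous_intros cq0 cP1)
    finally show ?thesis unfolding ops_area_def by simp
  qed
  have d2eq: "(d2 h (\<lambda>s. ops_support k h s + steiner_disk_support h s))\<^sup>2 = ip g g"
  proof -
    have "\<bar>h s - (ops_support k h s + steiner_disk_support h s)\<bar>\<^sup>2 = g s * g s" for s
      by (simp add: ops q0_def steiner_disk_support_def g_def E_def a0_def a1_def b1_def cc_def ss_def cc0
          power2_eq_square algebra_simps)
    then have "(d2 h (\<lambda>s. ops_support k h s + steiner_disk_support h s)) = sqrt (ip g g)"
      unfolding d2_def ip_def by simp
    then show ?thesis using ip_nonneg[OF cg] by simp
  qed
  have L: "oval_length h = 2 * pi * a0"
    using length_eq[OF assms(2)] Ih by (simp add: ip_def cc0)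
  have Ar: "oval_area h \<le> (ip h h - ip h1 h1) / 2"
    using area_bound[OF assms(2)] unfolding h1_def .
  have q0n: "0 \<le> ip q0 q0" by (rule ip_nonneg[OF cq0])
  have gn: "0 \<le> ip g g" by (rule ip_nonneg[OF cg])
  have absA: "\<bar>ops_area k h\<bar> = (ip P1 P1 - ip q0 q0) / 2"
    using opsA Wq q0n by simp
  have "4 * pi * oval_area h \<le> 4 * pi * ((ip h h - ip h1 h1) / 2)"
    using Ar by (intro mult_left_mono) auto
  moreover have "6 * pi * ip g g \<le> 2 * pi * (ip g' g' - ip g g)"
  proof -
    have "3 * ip g g \<le> ip g' g' - ip g g" using Wg by linarith
    then have "2 * pi * (3 * ip g g) \<le> 2 * pi * (ip g' g' - ip g g)" by (intro mult_left_mono) auto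
    then show ?thesis by simp
  qed
  moreover have "4 * pi * ((ip h h - ip h1 h1) / 2) = 4*pi*pi*a0^2 + 2*pi*ip q0 q0 + 2*pi*ip g g - 2*pi*ip P1 P1 - 2*pi*ip g' g'"
    unfolding Hh Hh1 by (simp add: field_simps power2_eq_square)
  moreover have "(2*pi*a0)^2 = 4*pi*pi*a0^2" by (simp add: power2_eq_square)
  moreover have "4 * pi * ((ip P1 P1 - ip q0 q0) / 2) = 2*pi*ip P1 P1 - 2*pi*ip q0 q0" by (simp add: field_simps)
  moreover have "2 * pi * (ip g' g' - ip g g) = 2*pi*ip g' g' - 2*pi*ip g g" by (simp add: algebra_simps)
  ultimately show ?thesis
    unfolding d2eq L absA by linarith
qed

end
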